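(* Let $\alpha,\beta\in\mathbb{R}$ with $\alpha>1$, where $\alpha$ is irrational and of finite type, and let $k\geqslant 2$ be an integer. Then for integers $N\geqslant 3$, $$ \#\{n\leqslant N : n\in\mathcal{B}_{\alpha,\beta},\ n \text{ is } k\text{-free}\}=\alpha^{-1}\zeta(k)^{-1}N+O\!\left(\frac{N\log\log N}{\log N}\right), $$ where $\zeta$ is the Riemann zeta function and the implied constant depends only on $\alpha$.
   Context: An integer $n$ is $k$-free if $p^k\nmid n$ for every prime $p$. The non-homogeneous Beatty sequence is $\mathcal{B}_{\alpha,\beta}=\{n\in\mathbb{N} : n=\lfloor \alpha m+\beta\rfloor \text{ for some } m\in\mathbb{Z}\}$. For an irrational number $\gamma$, its type is $\tau=\sup\{t\in\mathbb{R} : \liminf_{n\to\infty} n^t \|\gamma n\| = 0\}$, where $\|x\|$ is the distance from $x$ to the nearest integer; $\gamma$ is of finite type if $\tau<\infty$. *)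

theory Defs
  imports "HOL-Analysis.Analysis" "HOL-Computational_Algebra.Primes"
begin

definition dist_int :: "real \<Rightarrow> real" where
  "dist_int x = \<bar>x - of_int (round x)\<bar>"

definition num_type :: "real \<Rightarrow> ereal" where
  "num_type \<gamma> = Sup {ereal t | t. liminf (\<lambda>n::nat. ereal (real n powr t * dist_int (\<gamma> * real n))) = 0}"

definition finite_type :: "real \<Rightarrow> bool" where
  "finite_type \<gamma> \<longleftrightarrow> \<gamma> \<notin> \<rat> \<and> num_type \<gamma> < \<infinity>"

definition beatty :: "real \<Rightarrow> real \<Rightarrow> nat set" where
  "beatty \<alpha> \<beta> = {n. n \<ge> 1 \<and> (\<exists>m::int. int n = \<lfloor>\<alpha> * of_int m + \<beta>\<rfloor>)}"

definition kfree :: "nat \<Rightarrow> nat \<Rightarrow> bool" where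
  "kfree k n \<longleftrightarrow> (\<forall>p. prime p \<longrightarrow> \<not> p ^ k dvd n)"

definition zeta_real :: "real \<Rightarrow> real" where
  "zeta_real s = (\<Sum>n. 1 / real (Suc n) powr s)"

end

theory Submission
  imports Defs
begin


lemma dist_int_nonneg: "dist_int x \<ge> 0" by (simp add: dist_int_def)

lemma dist_int_le: "dist_int x \<le> \<bar>x - of_int m\<bar>"
  unfolding dist_int_def by (rule round_diff_minimal)

lemma dist_int_pos:
  assumes "\<alpha> \<notin> \<rat>" "n \<ge> (1::nat)"
  shows "dist_int (\<alpha> * real n) > 0"
proof (rule ccontr)
  assume "\<not> ?thesis"
  hence "\<alpha> * real n = of_int (round (\<alpha> * real n))"
    using dist_int_nonneg[of "\<alpha> * real n"] by (simp add: dist_int_def)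
  hence eq: "\<alpha> = of_int (round (\<alpha> * real n)) / real n" using assms(2)
    by (simp add: field_simps)
  have "\<alpha> \<in> \<rat>" by (subst eq) (intro Rats_divide Rats_of_int Rats_of_nat)
  with assms show False by simp
qed

lemma dioph:
  assumes "\<alpha> \<notin> \<rat>" "finite_type \<alpha>"
  obtains c T where "c > 0" "T \<ge> 1"
    "\<And>n::nat. n \<ge> 1 \<Longrightarrow> c \<le> real n powr T * dist_int (\<alpha> * real n)"
proof -
  have "num_type \<alpha> < \<infinity>" using assms by (simp add: finite_type_def)
  then obtain T0 where T0: "num_type \<alpha> < ereal T0"
    using that[of "real_of_ereal (num_type \<alpha>) + 1"] by (cases "num_type \<alpha>") auto
  let ?f = "\<lambda>n::nat. ereal (real n powr T0 * dist_int (\<alpha> * real n))"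
  have ne: "liminf ?f \<noteq> 0"
  proof
    assume "liminf ?f = 0"
    hence "ereal T0 \<le> num_type \<alpha>" unfolding num_type_def
      by (intro Sup_upper) blast
    with T0 show False by simp
  qed
  have "liminf ?f \<ge> 0"
    by (intro Liminf_bounded always_eventually) (simp add: dist_int_nonneg)
  with ne have "0 < liminf ?f" by simp
  then obtain y where y: "0 < ereal y" "ereal y < liminf ?f" using ereal_dense2 by blast
  have "eventually (\<lambda>n. ereal y < ?f n) sequentially" by (rule less_LiminfD[OF y(2)])
  then obtain n0 where n0: "\<And>n. n \<ge> n0 \<Longrightarrow> y < real n powr T0 * dist_int (\<alpha> * real n)"
    by (auto simp: eventually_sequentially)
  define T where "T = max T0 1"
  define g where "g = (\<lambda>n::nat. real n powr T * dist_int (\<alpha> * real n))"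
  define c where "c = min y (Min (insert 1 (g ` {1..<n0})))"
  have gpos: "g n > 0" if "n \<ge> 1" for n
    using dist_int_pos[OF assms(1) that] that by (simp add: g_def)
  have "c > 0" unfolding c_def using y gpos by (auto simp: Min_gr_iff)
  moreover have "T \<ge> 1" by (simp add: T_def)
  moreover have "c \<le> g n" if "n \<ge> 1" for n
  proof (cases "n < n0")
    case True
    hence "Min (insert 1 (g ` {1..<n0})) \<le> g n" using that by (intro Min_le) auto
    thus ?thesis by (simp add: c_def)
  next
    case False
    hence "y < real n powr T0 * dist_int (\<alpha> * real n)" using n0 by simp
    also have "\<dots> \<le> g n" unfolding g_def
      using that by (intro mult_right_mono powr_mono) (auto simp: T_def dist_int_nonneg)
    finally show ?thesis by (simp add: c_def)
  qed
  ultimately show ?thesis using that unfolding g_def by blast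
qed



lemma bij_mod:
  fixes a k :: int and r :: nat
  assumes "r \<ge> 1" "coprime a (int r)"
  shows "bij_betw (\<lambda>i. nat ((a * int i + k) mod int r)) {..<r} {..<r}"
proof -
  let ?f = "\<lambda>i. nat ((a * int i + k) mod int r)"
  have inj: "inj_on ?f {..<r}"
  proof (rule inj_onI)
    fix i j assume i: "i \<in> {..<r}" and j: "j \<in> {..<r}" and eq: "?f i = ?f j"
    have "(a * int i + k) mod int r = (a * int j + k) mod int r"
      using eq assms(1) by (simp add: nat_eq_iff)
    hence "int r dvd (a * int i + k) - (a * int j + k)"
      by (simp add: mod_eq_dvd_iff)
    hence "int r dvd a * (int i - int j)" by (simp add: algebra_simps)
    hence d: "int r dvd (int i - int j)"
      using assms(2) by (simp add: coprime_commute coprime_dvd_mult_right_iff)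
    have "\<bar>int i - int j\<bar> < int r" using i j by auto
    show "i = j"
    proof (rule ccontr)
      assume "i \<noteq> j"
      hence "int i - int j \<noteq> 0" by simp
      from dvd_imp_le_int[OF this d] have "int r \<le> \<bar>int i - int j\<bar>" by simp
      with \<open>\<bar>int i - int j\<bar> < int r\<close> show False by simp
    qed
  qed
  have sub: "?f ` {..<r} \<subseteq> {..<r}"
    using assms(1) by (auto simp: nat_less_iff)
  have "?f ` {..<r} = {..<r}" by (rule endo_inj_surj[OF _ sub inj]) simp
  with inj show ?thesis by (simp add: bij_betw_def)
qed

lemma card_bij_pred:
  assumes "bij_betw f A A"
  shows "card {i\<in>A. Q (f i)} = card {j\<in>A. Q j}"
proof -
  have "f ` {i\<in>A. Q (f i)} = {j\<in>A. Q j}"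
  proof
    show "f ` {i\<in>A. Q (f i)} \<subseteq> {j\<in>A. Q j}"
      using assms by (auto simp: bij_betw_def)
    show "{j\<in>A. Q j} \<subseteq> f ` {i\<in>A. Q (f i)}"
    proof
      fix j assume j: "j \<in> {j\<in>A. Q j}"
      hence "j \<in> f ` A" using assms by (simp add: bij_betw_def)
      then obtain i where "i \<in> A" "j = f i" by blast
      thus "j \<in> f ` {i\<in>A. Q (f i)}" using j by blast
    qed
  qed
  moreover have "{i\<in>A. Q (f i)} \<subseteq> A" by auto
  ultimately have "bij_betw f {i\<in>A. Q (f i)} {j\<in>A. Q j}"
    using bij_betw_subset[OF assms] by blast
  thus ?thesis by (rule bij_betw_same_card)
qed

lemma card_lt_real:
  "card {j\<in>{..<r}. real j < y} = min r (nat \<lceil>y\<rceil>)"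
proof -
  have e: "(j < nat \<lceil>y\<rceil>) = (real j < y)" for j :: nat
  proof -
    have "(j < nat \<lceil>y\<rceil>) = (int j < \<lceil>y\<rceil>)" by (simp add: zless_nat_eq_int_zless)
    also have "\<dots> = (of_int (int j) < y)" by (rule less_ceiling_iff)
    finally show ?thesis by simp
  qed
  have "{j\<in>{..<r}. real j < y} = {..<min r (nat \<lceil>y\<rceil>)}"
  proof (rule set_eqI)
    fix j show "j \<in> {j\<in>{..<r}. real j < y} \<longleftrightarrow> j \<in> {..<min r (nat \<lceil>y\<rceil>)}"
      using e[of j] by simp
  qed
  thus ?thesis by simp
qed

lemma frac_shift:
  fixes v :: real and r i :: nat
  assumes "r \<ge> 1"
  shows "frac (v + real i / real r) =
     (frac (real r * v) + real (nat ((1 * int i + \<lfloor>real r * v\<rfloor>) mod int r))) / real r"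
proof -
  define k0 where "k0 = \<lfloor>real r * v\<rfloor>"
  define s where "s = (int i + k0) mod int r"
  have s0: "0 \<le> s" "s < int r" using assms by (auto simp: s_def)
  have ds: "int i + k0 = int r * ((int i + k0) div int r) + s"
    by (simp add: s_def)
  have fr: "real r * v = of_int k0 + frac (real r * v)" by (simp add: k0_def frac_def)
  have "v + real i / real r - (frac (real r * v) + real (nat s)) / real r
      = of_int ((int i + k0) div int r)"
  proof -
    have "v + real i / real r - (frac (real r * v) + real (nat s)) / real r
        = (real r * v + real i - frac (real r * v) - of_int s) / real r"
      using assms s0 by (simp add: field_simps)
    also have "\<dots> = (of_int (int i + k0) - of_int s) / real r" using fr by simp
    also have "\<dots> = of_int ((int i + k0) div int r)"
      using assms by (subst ds) (simp add: field_simps)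
    finally show ?thesis .
  qed
  moreover have "0 \<le> (frac (real r * v) + real (nat s)) / real r" using s0 by simp
  moreover have "(frac (real r * v) + real (nat s)) / real r < 1"
  proof -
    have "real (nat s) \<le> real r - 1" using s0 by linarith
    hence "frac (real r * v) + real (nat s) < real r" using frac_lt_1[of "real r * v"] by linarith
    thus ?thesis using assms by simp
  qed
  ultimately show ?thesis unfolding s_def k0_def
    by (subst frac_unique_iff) (auto simp: add.commute)
qed

lemma L1:
  fixes v l :: real and r :: nat
  assumes "r \<ge> 1" "0 \<le> l" "l \<le> 1"
  shows "real (card {i\<in>{..<r}. frac (v + real i / real r) < l}) \<le> real r * l + 1"
    and "real (card {i\<in>{..<r}. frac (v + real i / real r) < l}) \<ge> real r * l - 1"
proof -
  define f where "f = frac (real r * v)"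
  let ?g = "\<lambda>i. nat ((1 * int i + \<lfloor>real r * v\<rfloor>) mod int r)"
  have "frac (v + real i / real r) < l \<longleftrightarrow> real (?g i) < real r * l - f" for i
  proof -
    have "frac (v + real i / real r) < l \<longleftrightarrow> (f + real (?g i)) / real r < l"
      using frac_shift[OF assms(1), of v i] by (simp add: f_def)
    also have "\<dots> \<longleftrightarrow> f + real (?g i) < l * real r"
      using assms(1) by (simp add: pos_divide_less_eq)
    finally show ?thesis by (simp add: algebra_simps)
  qed
  hence "{i\<in>{..<r}. frac (v + real i / real r) < l} = {i\<in>{..<r}. real (?g i) < real r * l - f}"
    by blast
  also have "card \<dots> = card {j\<in>{..<r}. real j < real r * l - f}"
    by (rule card_bij_pred[OF bij_mod]) (use assms in auto)
  also have "\<dots> = min r (nat \<lceil>real r * l - f\<rceil>)" by (rule card_lt_real)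
  finally have eq: "card {i\<in>{..<r}. frac (v + real i / real r) < l} = min r (nat \<lceil>real r * l - f\<rceil>)" .
  have f: "0 \<le> f" "f < 1" by (auto simp: f_def frac_lt_1)
  have "real (min r (nat \<lceil>real r * l - f\<rceil>)) \<le> real (nat \<lceil>real r * l - f\<rceil>)" by simp
  also have "\<dots> \<le> real r * l + 1"
  proof (cases "\<lceil>real r * l - f\<rceil> \<le> 0")
    case True
    hence "nat \<lceil>real r * l - f\<rceil> = 0" by simp
    thus ?thesis using assms by simp
  next
    case False
    hence "real (nat \<lceil>real r * l - f\<rceil>) = of_int \<lceil>real r * l - f\<rceil>" by simp
    also have "\<dots> < real r * l - f + 1" using ceiling_correct[of "real r * l - f"] by linarith
    finally show ?thesis using f by linarith
  qed
  finally show "real (card {i\<in>{..<r}. frac (v + real i / real r) < l}) \<le> real r * l + 1"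
    by (simp only: eq)
  have "real r * l \<le> real r * 1" using assms by (intro mult_left_mono) auto
  hence "real r * l - 1 \<le> real r" by simp
  moreover have "real r * l - f \<le> of_int \<lceil>real r * l - f\<rceil>" by (rule le_of_int_ceiling)
  hence "real r * l - 1 \<le> real (nat \<lceil>real r * l - f\<rceil>)" using f by linarith
  ultimately show "real (card {i\<in>{..<r}. frac (v + real i / real r) < l}) \<ge> real r * l - 1"
    unfolding eq by simp
qed



lemma sandwich_up:
  fixes z y e eta lam :: real
  assumes "\<bar>e\<bar> \<le> eta" "z = y + e" "frac z < lam" "lam + 2 * eta \<le> 1"
  shows "frac (y + eta) < lam + 2 * eta"
proof -
  define t where "t = \<lfloor>z\<rfloor>"
  have z1: "z - of_int t = frac z" by (simp add: t_def frac_def)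
  have z2: "of_int t \<le> z" by (simp add: t_def)
  have a: "of_int t \<le> y + eta" using z2 assms(1,2) by linarith
  have b: "y + eta < of_int t + lam + 2 * eta" using z1 assms(1,2,3) by linarith
  have "\<lfloor>y + eta\<rfloor> = t" using a b assms(4) by (intro floor_unique) linarith+
  hence "frac (y + eta) = y + eta - of_int t" by (simp add: frac_def)
  thus ?thesis using b by linarith
qed

lemma sandwich_down:
  fixes y e eta lam :: real
  assumes "\<bar>e\<bar> \<le> eta" "frac (y - eta) < lam - 2 * eta" "lam \<le> 1"
  shows "frac (y + e) < lam"
proof -
  define t where "t = \<lfloor>y - eta\<rfloor>"
  have z1: "y - eta - of_int t = frac (y - eta)" by (simp add: t_def frac_def)
  have z2: "of_int t \<le> y - eta" by (simp add: t_def)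
  have a: "of_int t \<le> y + e" using z2 assms(1) by linarith
  have b: "y + e < of_int t + lam" using z1 assms(1,2) by linarith
  have "\<lfloor>y + e\<rfloor> = t" using a b assms(3) by (intro floor_unique) linarith+
  hence "frac (y + e) = y + e - of_int t" by (simp add: frac_def)
  thus ?thesis using b by linarith
qed

lemma block:
  fixes \<theta> x lam :: real and r :: nat and a :: int
  assumes r: "r \<ge> 1" and cop: "coprime a (int r)"
    and app: "\<bar>real r * \<theta> - of_int a\<bar> \<le> 1 / real r" and lam: "0 \<le> lam" "lam \<le> 1"
  shows "\<bar>real (card {i\<in>{..<r}. frac (x + real i * \<theta>) < lam}) - real r * lam\<bar> \<le> 3"
proof -
  define eta where "eta = 1 / real r"
  define g where "g = (\<lambda>i. nat ((a * int i + 0) mod int r))"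
  have bij: "bij_betw g {..<r} {..<r}" unfolding g_def by (rule bij_mod[OF r cop])
  have rpos: "real r > 0" using r by simp
  have eta0: "eta > 0" using rpos by (simp add: eta_def)
  define e where "e = (\<lambda>i. real i * \<theta> - real i * of_int a / real r)"
  have decomp: "x + real i * \<theta> = (x + real (g i) / real r + of_int (a * int i div int r)) + e i"
    and ebd: "\<bar>e i\<bar> \<le> eta"
    if "i < r" for i
  proof -
    have m: "a * int i = int r * (a * int i div int r) + (a * int i) mod int r" by simp
    have "real (g i) = of_int ((a * int i) mod int r)"
      using r by (simp add: g_def)
    hence "of_int a * real i = real r * of_int (a * int i div int r) + real (g i)"
      by (metis m of_int_add of_int_mult of_int_of_nat_eq)
    hence "real i * of_int a / real r = real (g i) / real r + of_int (a * int i div int r)"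
      using rpos by (simp add: field_simps)
    thus "x + real i * \<theta> = (x + real (g i) / real r + of_int (a * int i div int r)) + e i"
      by (simp add: e_def)
    have "e i = real i * (real r * \<theta> - of_int a) / real r" using rpos by (simp add: e_def field_simps)
    hence "\<bar>e i\<bar> = real i * \<bar>real r * \<theta> - of_int a\<bar> / real r" by (simp add: abs_mult)
    also have "\<dots> \<le> real r * (1 / real r) / real r"
      using app that by (intro divide_right_mono mult_mono) auto
    also have "\<dots> = eta" using rpos by (simp add: eta_def)
    finally show "\<bar>e i\<bar> \<le> eta" .
  qed
  define S where "S = {i\<in>{..<r}. frac (x + real i * \<theta>) < lam}"
  have up: "real (card S) \<le> real r * lam + 3"
  proof (cases "lam + 2 * eta \<le> 1")
    case True
    have "S \<subseteq> {i\<in>{..<r}. frac ((x + eta) + real (g i) / real r) < lam + 2 * eta}"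
    proof
      fix i assume "i \<in> S"
      hence i: "i < r" "frac (x + real i * \<theta>) < lam" by (auto simp: S_def)
      have "frac ((x + real (g i) / real r + of_int (a * int i div int r)) + eta) < lam + 2 * eta"
        by (rule sandwich_up[OF ebd[OF i(1)] decomp[OF i(1)] i(2) True])
      hence "frac ((x + eta) + real (g i) / real r) < lam + 2 * eta"
        by (metis (no_types, lifting) add.assoc add.commute frac_add_of_int_right)
      thus "i \<in> {i\<in>{..<r}. frac ((x + eta) + real (g i) / real r) < lam + 2 * eta}" using i by simp
    qed
    hence "card S \<le> card {i\<in>{..<r}. frac ((x + eta) + real (g i) / real r) < lam + 2 * eta}"
      by (intro card_mono) auto
    also have "\<dots> = card {j\<in>{..<r}. frac ((x + eta) + real j / real r) < lam + 2 * eta}"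
      by (rule card_bij_pred[OF bij])
    finally have "real (card S) \<le> real (card {j\<in>{..<r}. frac ((x + eta) + real j / real r) < lam + 2 * eta})"
      by simp
    also have "\<dots> \<le> real r * (lam + 2 * eta) + 1"
      by (rule L1(1)) (use r True lam eta0 in auto)
    also have "\<dots> = real r * lam + 3" using rpos by (simp add: eta_def field_simps)
    finally show ?thesis .
  next
    case False
    have "card S \<le> card {..<r}" unfolding S_def by (intro card_mono) auto
    hence "real (card S) \<le> real r" by simp
    also have "\<dots> \<le> real r * lam + 3"
    proof -
      have "1 < lam + 2 / real r" using False by (simp add: eta_def)
      hence "real r < real r * (lam + 2 / real r)" using rpos by simp
      also have "\<dots> = real r * lam + 2" using rpos by (simp add: field_simps)
      finally show ?thesis by simp
    qed
    finally show ?thesis .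
  qed
  have down: "real (card S) \<ge> real r * lam - 3"
  proof (cases "lam - 2 * eta \<ge> 0")
    case True
    have "{i\<in>{..<r}. frac ((x - eta) + real (g i) / real r) < lam - 2 * eta} \<subseteq> S"
    proof
      fix i assume "i \<in> {i\<in>{..<r}. frac ((x - eta) + real (g i) / real r) < lam - 2 * eta}"
      hence i: "i < r" "frac ((x - eta) + real (g i) / real r) < lam - 2 * eta" by auto
      have "frac ((x + real (g i) / real r + of_int (a * int i div int r)) - eta) < lam - 2 * eta"
        using i(2) by (metis (no_types, lifting) add.commute diff_add_eq frac_add_of_int_right)
      hence "frac ((x + real (g i) / real r + of_int (a * int i div int r)) + (real i * \<theta> - real i * of_int a / real r)) < lam"
        using sandwich_down[OF ebd[OF i(1)] _ lam(2)] by (simp add: e_def)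
      hence "frac ((x + real (g i) / real r + of_int (a * int i div int r)) + e i) < lam"
        by (simp only: e_def)
      hence "frac (x + real i * \<theta>) < lam" unfolding decomp[OF i(1)] .
      thus "i \<in> S" using i by (simp add: S_def)
    qed
    hence "card {i\<in>{..<r}. frac ((x - eta) + real (g i) / real r) < lam - 2 * eta} \<le> card S"
      unfolding S_def by (intro card_mono) auto
    moreover have "card {i\<in>{..<r}. frac ((x - eta) + real (g i) / real r) < lam - 2 * eta}
       = card {j\<in>{..<r}. frac ((x - eta) + real j / real r) < lam - 2 * eta}"
      by (rule card_bij_pred[OF bij])
    ultimately have "real (card {j\<in>{..<r}. frac ((x - eta) + real j / real r) < lam - 2 * eta}) \<le> real (card S)"
      by simp
    moreover have "real r * (lam - 2 * eta) - 1 \<le> real (card {j\<in>{..<r}. frac ((x - eta) + real j / real r) < lam - 2 * eta})"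
      by (rule L1(2)) (use r True lam eta0 in auto)
    moreover have "real r * (lam - 2 * eta) - 1 = real r * lam - 3" using rpos by (simp add: eta_def field_simps)
    ultimately show ?thesis by linarith
  next
    case False
    hence "lam < 2 / real r" by (simp add: eta_def)
    hence "real r * lam < real r * (2 / real r)" using rpos by (intro mult_strict_left_mono) auto
    moreover have "real r * (2 / real r) = 2" using rpos by simp
    ultimately show ?thesis by simp
  qed
  show ?thesis using up down unfolding S_def by linarith
qed



lemma block_shift:
  fixes m0 :: int
  shows "card {m\<in>{m0..<m0 + int r}. P m} = card {i\<in>{..<r}. P (m0 + int i)}"
proof -
  have "{m\<in>{m0..<m0 + int r}. P m} = (\<lambda>i. m0 + int i) ` {i\<in>{..<r}. P (m0 + int i)}"
  proof
    show "{m\<in>{m0..<m0 + int r}. P m} \<subseteq> (\<lambda>i. m0 + int i) ` {i\<in>{..<r}. P (m0 + int i)}"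
    proof
      fix m assume m: "m \<in> {m\<in>{m0..<m0 + int r}. P m}"
      hence "m = m0 + int (nat (m - m0))" "nat (m - m0) < r" by auto
      thus "m \<in> (\<lambda>i. m0 + int i) ` {i\<in>{..<r}. P (m0 + int i)}" using m
        by (metis (mono_tags, lifting) image_eqI lessThan_iff mem_Collect_eq)
    qed
  qed auto
  moreover have "inj_on (\<lambda>i. m0 + int i) {i\<in>{..<r}. P (m0 + int i)}" by (auto simp: inj_on_def)
  ultimately show ?thesis by (simp add: card_image)
qed

lemma range_count:
  fixes \<theta> c lam :: real and r :: nat and a :: int
  assumes r: "r \<ge> 1" and cop: "coprime a (int r)"
    and app: "\<bar>real r * \<theta> - of_int a\<bar> \<le> 1 / real r" and lam: "0 \<le> lam" "lam \<le> 1"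
  shows "\<bar>real (card {m\<in>{m0..<m0 + int L}. frac (c + of_int m * \<theta>) < lam}) - real L * lam\<bar>
           \<le> 3 * real L / real r + 2 * real r"
proof (induction L arbitrary: m0 rule: less_induct)
  case (less L)
  show ?case
  proof (cases "L < r")
    case True
    have "card {m\<in>{m0..<m0 + int L}. frac (c + of_int m * \<theta>) < lam} \<le> card {m0..<m0 + int L}"
      by (intro card_mono) auto
    hence c1: "real (card {m\<in>{m0..<m0 + int L}. frac (c + of_int m * \<theta>) < lam}) \<le> real L" by simp
    have "real L * lam \<le> real L" using lam by (simp add: mult_left_le)
    moreover have "0 \<le> real L * lam" using lam by simp
    moreover have "real L \<le> 2 * real r" using True by simp
    moreover have "0 \<le> 3 * real L / real r" by simp
    moreover have "0 \<le> real (card {m\<in>{m0..<m0 + int L}. frac (c + of_int m * \<theta>) < lam})" by simp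
    ultimately show ?thesis using c1 by (intro abs_leI) linarith+
  next
    case False
    define L' where "L' = L - r"
    have LL: "L = r + L'" using False by (simp add: L'_def)
    have "L' < L" using r False by (simp add: L'_def)
    note IH = less.IH[OF this, of "m0 + int r"]
    have split: "{m\<in>{m0..<m0 + int L}. frac (c + of_int m * \<theta>) < lam}
       = {m\<in>{m0..<m0 + int r}. frac (c + of_int m * \<theta>) < lam} \<union>
         {m\<in>{m0 + int r..<m0 + int r + int L'}. frac (c + of_int m * \<theta>) < lam}"
      by (auto simp: LL)
    have "card {m\<in>{m0..<m0 + int L}. frac (c + of_int m * \<theta>) < lam}
       = card {m\<in>{m0..<m0 + int r}. frac (c + of_int m * \<theta>) < lam} +
         card {m\<in>{m0 + int r..<m0 + int r + int L'}. frac (c + of_int m * \<theta>) < lam}"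
      unfolding split by (intro card_Un_disjoint finite_Collect_conjI disjI1) auto
    moreover have "card {m\<in>{m0..<m0 + int r}. frac (c + of_int m * \<theta>) < lam}
       = card {i\<in>{..<r}. frac ((c + of_int m0 * \<theta>) + real i * \<theta>) < lam}"
      by (subst block_shift) (simp add: algebra_simps)
    moreover have "\<bar>real (card {i\<in>{..<r}. frac ((c + of_int m0 * \<theta>) + real i * \<theta>) < lam}) - real r * lam\<bar> \<le> 3"
      by (rule block[OF r cop app lam])
    moreover have "3 * real L / real r = 3 + 3 * real L' / real r" using r
      by (simp add: LL field_simps)
    ultimately show ?thesis using IH by (simp add: LL algebra_simps abs_le_iff)
  qed
qed



lemma floor_dvd_iff:
  fixes x :: real and q :: nat
  assumes "q \<ge> 1"
  shows "(int q dvd \<lfloor>x\<rfloor>) \<longleftrightarrow> frac (x / real q) < 1 / real q"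
proof
  have qp: "real q > 0" using assms by simp
  assume "int q dvd \<lfloor>x\<rfloor>"
  then obtain t where t: "\<lfloor>x\<rfloor> = int q * t" by (auto simp: dvd_def)
  have t': "of_int \<lfloor>x\<rfloor> = real q * of_int t" using t by simp
  have a: "real q * of_int t \<le> x" using of_int_floor_le[of x] t' by linarith
  have b: "x < real q * of_int t + 1" using real_of_int_floor_add_one_gt[of x] t' by linarith
  have a': "of_int t \<le> x / real q" using a qp by (simp add: field_simps)
  have b': "x / real q < of_int t + 1 / real q" using b qp by (simp add: field_simps)
  have "1 / real q \<le> 1" using assms by simp
  hence "\<lfloor>x / real q\<rfloor> = t" using a' b' by (intro floor_unique) linarith+
  hence "frac (x / real q) = x / real q - of_int t" by (simp add: frac_def)
  thus "frac (x / real q) < 1 / real q" using b' by linarith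
next
  have qp: "real q > 0" using assms by simp
  assume h: "frac (x / real q) < 1 / real q"
  define t where "t = \<lfloor>x / real q\<rfloor>"
  have "x / real q - of_int t < 1 / real q" using h by (simp add: t_def frac_def)
  hence "(x / real q - of_int t) * real q < (1 / real q) * real q"
    using qp by (intro mult_strict_right_mono) auto
  moreover have "(x / real q - of_int t) * real q = x - real q * of_int t" using qp by (simp add: field_simps)
  moreover have "(1 / real q) * real q = 1" using qp by simp
  ultimately have b: "x < real q * of_int t + 1" by linarith
  have "of_int t \<le> x / real q" by (simp add: t_def)
  hence a: "real q * of_int t \<le> x" using qp by (simp add: field_simps)
  have "\<lfloor>x\<rfloor> = int q * t" using a b by (intro floor_unique) auto
  thus "int q dvd \<lfloor>x\<rfloor>" by simp
qed

lemma beatty_repr: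
  fixes \<alpha> \<beta> :: real and N :: nat
  assumes "\<alpha> > 1"
  defines "m0 \<equiv> \<lceil>(1 - \<beta>) / \<alpha>\<rceil>" and "m1 \<equiv> \<lceil>(real N + 1 - \<beta>) / \<alpha>\<rceil>"
  shows "{n \<in> beatty \<alpha> \<beta>. n \<le> N \<and> P n} = (\<lambda>m. nat \<lfloor>\<alpha> * of_int m + \<beta>\<rfloor>) ` {m\<in>{m0..<m1}. P (nat \<lfloor>\<alpha> * of_int m + \<beta>\<rfloor>)}"
    and "inj_on (\<lambda>m. nat \<lfloor>\<alpha> * of_int m + \<beta>\<rfloor>) {m0..<m1}"
    and "real N / \<alpha> - 1 \<le> of_int (m1 - m0)" "of_int (m1 - m0) \<le> real N / \<alpha> + 1"
proof -
  have ap: "\<alpha> > 0" using assms by simp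
  have mem: "m \<in> {m0..<m1} \<longleftrightarrow> 1 \<le> \<lfloor>\<alpha> * of_int m + \<beta>\<rfloor> \<and> \<lfloor>\<alpha> * of_int m + \<beta>\<rfloor> \<le> int N" for m
  proof -
    have "m0 \<le> m \<longleftrightarrow> (1 - \<beta>) / \<alpha> \<le> of_int m" by (simp add: m0_def ceiling_le_iff)
    also have "\<dots> \<longleftrightarrow> 1 \<le> \<alpha> * of_int m + \<beta>" using ap by (simp add: field_simps)
    also have "\<dots> \<longleftrightarrow> 1 \<le> \<lfloor>\<alpha> * of_int m + \<beta>\<rfloor>" by (simp add: le_floor_iff)
    finally have A: "m0 \<le> m \<longleftrightarrow> 1 \<le> \<lfloor>\<alpha> * of_int m + \<beta>\<rfloor>" .
    have "m < m1 \<longleftrightarrow> of_int m < (real N + 1 - \<beta>) / \<alpha>" by (simp add: m1_def less_ceiling_iff)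
    also have "\<dots> \<longleftrightarrow> \<alpha> * of_int m + \<beta> < real N + 1" using ap by (simp add: field_simps)
    also have "\<dots> \<longleftrightarrow> \<lfloor>\<alpha> * of_int m + \<beta>\<rfloor> \<le> int N" by (simp add: floor_le_iff)
    finally have B: "m < m1 \<longleftrightarrow> \<lfloor>\<alpha> * of_int m + \<beta>\<rfloor> \<le> int N" .
    show ?thesis using A B by auto
  qed
  show "{n \<in> beatty \<alpha> \<beta>. n \<le> N \<and> P n} = (\<lambda>m. nat \<lfloor>\<alpha> * of_int m + \<beta>\<rfloor>) ` {m\<in>{m0..<m1}. P (nat \<lfloor>\<alpha> * of_int m + \<beta>\<rfloor>)}"
  proof
    show "{n \<in> beatty \<alpha> \<beta>. n \<le> N \<and> P n} \<subseteq> (\<lambda>m. nat \<lfloor>\<alpha> * of_int m + \<beta>\<rfloor>) ` {m\<in>{m0..<m1}. P (nat \<lfloor>\<alpha> * of_int m + \<beta>\<rfloor>)}"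
    proof
      fix n assume "n \<in> {n \<in> beatty \<alpha> \<beta>. n \<le> N \<and> P n}"
      then obtain m where n: "n \<ge> 1" "int n = \<lfloor>\<alpha> * of_int m + \<beta>\<rfloor>" "n \<le> N" "P n"
        by (auto simp: beatty_def)
      have "m \<in> {m0..<m1}" using mem[of m] n by linarith
      moreover have "n = nat \<lfloor>\<alpha> * of_int m + \<beta>\<rfloor>" using n(2) by simp
      ultimately show "n \<in> (\<lambda>m. nat \<lfloor>\<alpha> * of_int m + \<beta>\<rfloor>) ` {m\<in>{m0..<m1}. P (nat \<lfloor>\<alpha> * of_int m + \<beta>\<rfloor>)}"
        using n(4) by blast
    qed
    show "(\<lambda>m. nat \<lfloor>\<alpha> * of_int m + \<beta>\<rfloor>) ` {m\<in>{m0..<m1}. P (nat \<lfloor>\<alpha> * of_int m + \<beta>\<rfloor>)} \<subseteq> {n \<in> beatty \<alpha> \<beta>. n \<le> N \<and> P n}"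
    proof
      fix n assume "n \<in> (\<lambda>m. nat \<lfloor>\<alpha> * of_int m + \<beta>\<rfloor>) ` {m\<in>{m0..<m1}. P (nat \<lfloor>\<alpha> * of_int m + \<beta>\<rfloor>)}"
      then obtain m where m: "m \<in> {m0..<m1}" "P (nat \<lfloor>\<alpha> * of_int m + \<beta>\<rfloor>)" "n = nat \<lfloor>\<alpha> * of_int m + \<beta>\<rfloor>"
        by blast
      have f: "1 \<le> \<lfloor>\<alpha> * of_int m + \<beta>\<rfloor>" "\<lfloor>\<alpha> * of_int m + \<beta>\<rfloor> \<le> int N" using mem[of m] m(1) by auto
      have ni: "int n = \<lfloor>\<alpha> * of_int m + \<beta>\<rfloor>" using f(1) m(3) by simp
      have "n \<ge> 1" "n \<le> N" using ni f by linarith+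
      note this ni
      thus "n \<in> {n \<in> beatty \<alpha> \<beta>. n \<le> N \<and> P n}" using m by (auto simp: beatty_def)
    qed
  qed
  show "inj_on (\<lambda>m. nat \<lfloor>\<alpha> * of_int m + \<beta>\<rfloor>) {m0..<m1}"
  proof (rule inj_onI)
    fix m m' assume m: "m \<in> {m0..<m1}" and m': "m' \<in> {m0..<m1}"
      and eq: "nat \<lfloor>\<alpha> * of_int m + \<beta>\<rfloor> = nat \<lfloor>\<alpha> * of_int m' + \<beta>\<rfloor>"
    have "1 \<le> \<lfloor>\<alpha> * of_int m + \<beta>\<rfloor>" "1 \<le> \<lfloor>\<alpha> * of_int m' + \<beta>\<rfloor>" using mem m m' by auto
    hence h0: "0 \<le> \<lfloor>\<alpha> * of_int m + \<beta>\<rfloor>" "0 \<le> \<lfloor>\<alpha> * of_int m' + \<beta>\<rfloor>" by linarith+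
    have eq': "\<lfloor>\<alpha> * of_int m + \<beta>\<rfloor> = \<lfloor>\<alpha> * of_int m' + \<beta>\<rfloor>"
      using eq_nat_nat_iff[OF h0] eq by blast
    have mono: "\<lfloor>\<alpha> * of_int x + \<beta>\<rfloor> < \<lfloor>\<alpha> * of_int y + \<beta>\<rfloor>" if "x < y" for x y :: int
    proof -
      have "of_int x + 1 \<le> (of_int y :: real)" using that by linarith
      hence "\<alpha> * of_int x + \<alpha> \<le> \<alpha> * of_int y" using ap
        by (metis distrib_left mult.right_neutral mult_left_mono less_imp_le)
      hence "\<alpha> * of_int x + \<beta> + 1 < \<alpha> * of_int y + \<beta>" using assms by linarith
      thus ?thesis by linarith
    qed
    show "m = m'"
      using mono[of m m'] mono[of m' m] eq' by (cases "m < m'"; cases "m' < m") auto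
  qed
  have c0: "(1 - \<beta>) / \<alpha> \<le> of_int m0" "of_int m0 < (1 - \<beta>) / \<alpha> + 1"
    unfolding m0_def by linarith+
  have c1: "(real N + 1 - \<beta>) / \<alpha> \<le> of_int m1" "of_int m1 < (real N + 1 - \<beta>) / \<alpha> + 1"
    unfolding m1_def by linarith+
  have d: "(real N + 1 - \<beta>) / \<alpha> - (1 - \<beta>) / \<alpha> = real N / \<alpha>"
    using ap by (simp add: field_simps)
  have "1 / \<alpha> \<le> 1" using assms by simp
  show "real N / \<alpha> - 1 \<le> of_int (m1 - m0)" using c0 c1 d by simp
  show "of_int (m1 - m0) \<le> real N / \<alpha> + 1" using c0 c1 d by simp
qed



lemma Aq_est:
  fixes \<alpha> \<beta> c T :: real and N q Qd :: nat
  assumes a1: "\<alpha> > 1" and c0: "c > 0" and T1: "T \<ge> 1"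
    and dio: "\<And>n::nat. n \<ge> 1 \<Longrightarrow> c \<le> real n powr T * dist_int (\<alpha> * real n)"
    and q1: "q \<ge> 1" and Qd1: "Qd \<ge> 1" and N1: "N \<ge> 1"
  shows "\<exists>r::nat. r \<ge> 1 \<and> r \<le> Qd \<and> c * real Qd < real q * real r powr T \<and>
     \<bar>real (card {n \<in> beatty \<alpha> \<beta>. n \<le> N \<and> q dvd n}) - real N / (\<alpha> * real q)\<bar>
        \<le> 3 * (real N / \<alpha> + 1) / real r + 2 * real r + 1"
proof -
  define \<theta> where "\<theta> = \<alpha> / real q"
  have qp: "real q > 0" using q1 by simp
  have ap: "\<alpha> > 0" using a1 by simp
  obtain q0 p where q0: "0 < q0" "q0 \<le> int (Qd ^ 1)"
    and app0: "\<bar>of_int q0 * \<theta> - of_int (p (0::nat))\<bar> < 1 / real Qd"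
    using Dirichlet_approx_simult[where \<theta>="\<lambda>_. \<theta>" and N=Qd and n=1] Qd1 by auto
  define g where "g = gcd q0 (p 0)"
  define r0 where "r0 = q0 div g"
  define a where "a = p 0 div g"
  have gpos: "g > 0" using q0 by (simp add: g_def)
  have cop: "coprime r0 a" unfolding r0_def a_def g_def
    by (rule div_gcd_coprime) (use q0 in auto)
  have q0eq: "q0 = r0 * g" by (simp add: r0_def g_def)
  have peq: "p 0 = a * g" by (simp add: a_def g_def)
  have r0pos: "r0 > 0" using q0 gpos q0eq by (simp add: zero_less_mult_iff)
  define r where "r = nat r0"
  have rr: "int r = r0" using r0pos by (simp add: r_def)
  have r1: "r \<ge> 1" using r0pos rr by linarith
  have rQ: "r \<le> Qd"
  proof -
    have "r0 \<le> q0" using q0eq gpos r0pos by (simp add: mult_le_cancel_left1)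
    thus ?thesis using q0 rr by simp
  qed
  have cop': "coprime a (int r)" using cop rr by (simp add: coprime_commute)
  have gr: "real_of_int g \<ge> 1" using gpos by simp
  have e1: "of_int q0 * \<theta> - of_int (p 0) = of_int g * (real r * \<theta> - of_int a)"
    using q0eq peq rr by (simp add: algebra_simps)
  have app: "\<bar>real r * \<theta> - of_int a\<bar> < 1 / real Qd"
  proof -
    have "\<bar>real r * \<theta> - of_int a\<bar> \<le> of_int g * \<bar>real r * \<theta> - of_int a\<bar>"
      using gr by (simp add: mult_le_cancel_right1)
    also have "\<dots> = \<bar>of_int q0 * \<theta> - of_int (p 0)\<bar>" using e1 gpos by (simp add: abs_mult)
    finally show ?thesis using app0 by linarith
  qed
  have app': "\<bar>real r * \<theta> - of_int a\<bar> \<le> 1 / real r"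
  proof -
    have "1 / real Qd \<le> 1 / real r" using r1 rQ by (simp add: frac_le)
    thus ?thesis using app by linarith
  qed
  have "c * real Qd < real q * real r powr T"
  proof -
    have "dist_int (\<alpha> * real r) \<le> \<bar>\<alpha> * real r - of_int (int q * a)\<bar>" by (rule dist_int_le)
    also have "\<alpha> * real r - of_int (int q * a) = real q * (real r * \<theta> - of_int a)"
      using qp by (simp add: \<theta>_def field_simps)
    also have "\<bar>\<dots>\<bar> = real q * \<bar>real r * \<theta> - of_int a\<bar>" using qp by (simp add: abs_mult)
    also have "\<dots> < real q * (1 / real Qd)" using qp app by (intro mult_strict_left_mono) auto
    finally have dl: "dist_int (\<alpha> * real r) < real q / real Qd" by simp
    have rT: "real r powr T > 0" using r1 by simp
    have "c \<le> real r powr T * dist_int (\<alpha> * real r)" by (rule dio[OF r1])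
    also have "\<dots> < real r powr T * (real q / real Qd)" using dl rT by (intro mult_strict_left_mono) auto
    finally have "c < real r powr T * (real q / real Qd)" .
    hence "c * real Qd < real r powr T * (real q / real Qd) * real Qd"
      using Qd1 by (intro mult_strict_right_mono) auto
    also have "\<dots> = real q * real r powr T" using Qd1 by (simp add: field_simps)
    finally show ?thesis .
  qed
  define m0 where "m0 = \<lceil>(1 - \<beta>) / \<alpha>\<rceil>"
  define m1 where "m1 = \<lceil>(real N + 1 - \<beta>) / \<alpha>\<rceil>"
  note br = beatty_repr[OF a1, where N=N and \<beta>=\<beta>, folded m0_def m1_def]
  have L1': "real N / \<alpha> - 1 \<le> of_int (m1 - m0)" "of_int (m1 - m0) \<le> real N / \<alpha> + 1" using br(3,4) by auto
  have "real N / \<alpha> > 0" using N1 ap by simp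
  hence "of_int (m1 - m0) > (-1::real)" using L1'(1) by linarith
  hence m10: "m1 - m0 \<ge> 0" by linarith
  define L where "L = nat (m1 - m0)"
  have m1L: "m1 = m0 + int L" using m10 by (simp add: L_def)
  have Lb: "\<bar>real L - real N / \<alpha>\<bar> \<le> 1" using L1' m10 by (simp add: L_def abs_le_iff)
  have "card {n \<in> beatty \<alpha> \<beta>. n \<le> N \<and> q dvd n}
      = card {m\<in>{m0..<m1}. q dvd nat \<lfloor>\<alpha> * of_int m + \<beta>\<rfloor>}"
  proof -
    have "{m\<in>{m0..<m1}. q dvd nat \<lfloor>\<alpha> * of_int m + \<beta>\<rfloor>} \<subseteq> {m0..<m1}" by blast
    from card_image[OF inj_on_subset[OF br(2) this]] show ?thesis unfolding br(1) .
  qed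
  also have "{m\<in>{m0..<m1}. q dvd nat \<lfloor>\<alpha> * of_int m + \<beta>\<rfloor>}
      = {m\<in>{m0..<m0 + int L}. frac (\<beta> / real q + of_int m * \<theta>) < 1 / real q}"
  proof -
    have "q dvd nat \<lfloor>\<alpha> * of_int m + \<beta>\<rfloor> \<longleftrightarrow> frac (\<beta> / real q + of_int m * \<theta>) < 1 / real q"
      if "m \<in> {m0..<m1}" for m
    proof -
      have "1 \<le> \<lfloor>\<alpha> * of_int m + \<beta>\<rfloor>"
      proof -
        have "nat \<lfloor>\<alpha> * of_int m + \<beta>\<rfloor> \<in> {n \<in> beatty \<alpha> \<beta>. n \<le> N \<and> True}"
          using br(1)[of "\<lambda>_. True"] that by blast
        hence "nat \<lfloor>\<alpha> * of_int m + \<beta>\<rfloor> \<ge> 1" by (simp add: beatty_def)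
        thus ?thesis by linarith
      qed
      hence zz: "int (nat \<lfloor>\<alpha> * of_int m + \<beta>\<rfloor>) = \<lfloor>\<alpha> * of_int m + \<beta>\<rfloor>" by simp
      have "q dvd nat \<lfloor>\<alpha> * of_int m + \<beta>\<rfloor> \<longleftrightarrow> int q dvd int (nat \<lfloor>\<alpha> * of_int m + \<beta>\<rfloor>)"
        by (rule int_dvd_int_iff[symmetric])
      also have "\<dots> \<longleftrightarrow> int q dvd \<lfloor>\<alpha> * of_int m + \<beta>\<rfloor>" by (simp only: zz)
      also have "\<dots> \<longleftrightarrow> frac ((\<alpha> * of_int m + \<beta>) / real q) < 1 / real q"
        by (rule floor_dvd_iff[OF q1])
      also have "(\<alpha> * of_int m + \<beta>) / real q = \<beta> / real q + of_int m * \<theta>"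
        using qp by (simp add: \<theta>_def field_simps)
      finally show ?thesis .
    qed
    note iff = this
    show ?thesis unfolding m1L[symmetric]
    proof (rule set_eqI)
      fix m
      show "m \<in> {m\<in>{m0..<m1}. q dvd nat \<lfloor>\<alpha> * of_int m + \<beta>\<rfloor>} \<longleftrightarrow>
            m \<in> {m\<in>{m0..<m1}. frac (\<beta> / real q + of_int m * \<theta>) < 1 / real q}"
        using iff[of m] by blast
    qed
  qed
  finally have cardeq: "card {n \<in> beatty \<alpha> \<beta>. n \<le> N \<and> q dvd n}
      = card {m\<in>{m0..<m0 + int L}. frac (\<beta> / real q + of_int m * \<theta>) < 1 / real q}" .
  have lam: "0 \<le> 1 / real q" "1 / real q \<le> 1" using q1 by auto
  have rc: "\<bar>real (card {m\<in>{m0..<m0 + int L}. frac (\<beta> / real q + of_int m * \<theta>) < 1 / real q})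
      - real L * (1 / real q)\<bar> \<le> 3 * real L / real r + 2 * real r"
    by (rule range_count[OF r1 cop' app' lam])
  have "3 * real L / real r \<le> 3 * (real N / \<alpha> + 1) / real r"
    using Lb r1 by (intro divide_right_mono) auto
  moreover have "\<bar>real L * (1 / real q) - real N / (\<alpha> * real q)\<bar> \<le> 1"
  proof -
    have "real L * (1 / real q) - real N / (\<alpha> * real q) = (real L - real N / \<alpha>) / real q"
      using qp ap by (simp add: field_simps)
    also have "\<bar>\<dots>\<bar> = \<bar>real L - real N / \<alpha>\<bar> / real q" by (simp add: abs_divide)
    also have "\<dots> \<le> 1 / real q" using Lb qp by (intro divide_right_mono) auto
    also have "\<dots> \<le> 1" using q1 by simp
    finally show ?thesis .
  qed
  ultimately have "\<bar>real (card {n \<in> beatty \<alpha> \<beta>. n \<le> N \<and> q dvd n}) - real N / (\<alpha> * real q)\<bar>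
        \<le> 3 * (real N / \<alpha> + 1) / real r + 2 * real r + 1"
    using rc unfolding cardeq by linarith
  thus ?thesis using r1 rQ \<open>c * real Qd < real q * real r powr T\<close> by blast
qed



lemma mult_count:
  assumes q1: "q \<ge> (1::nat)"
  shows "real (card {n \<in> beatty \<alpha> \<beta>. n \<le> N \<and> q dvd n}) \<le> real N / real q"
proof -
  have "{n \<in> beatty \<alpha> \<beta>. n \<le> N \<and> q dvd n} \<subseteq> (\<lambda>j. q * j) ` {1..N div q}"
  proof
    fix n assume n: "n \<in> {n \<in> beatty \<alpha> \<beta>. n \<le> N \<and> q dvd n}"
    then obtain j where j: "n = q * j" by (auto simp: dvd_def)
    have "n \<ge> 1" "n \<le> N" using n by (auto simp: beatty_def)
    hence "j \<ge> 1" using j by (cases j) auto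
    moreover have "j \<le> N div q" using \<open>n \<le> N\<close> j q1
      by (simp add: less_eq_div_iff_mult_less_eq mult.commute)
    ultimately show "n \<in> (\<lambda>j. q * j) ` {1..N div q}" using j by auto
  qed
  hence "card {n \<in> beatty \<alpha> \<beta>. n \<le> N \<and> q dvd n} \<le> card ((\<lambda>j. q * j) ` {1..N div q})"
    by (intro card_mono) auto
  also have "\<dots> \<le> card {1..N div q}" by (rule card_image_le) simp
  also have "\<dots> = N div q" by simp
  finally have "real (card {n \<in> beatty \<alpha> \<beta>. n \<le> N \<and> q dvd n}) \<le> real (N div q)" by simp
  also have "real (N div q) \<le> real N / real q"
  proof -
    have "(N div q) * q \<le> N" by (rule div_times_less_eq_dividend)
    hence "real (N div q) * real q \<le> real N" by (metis of_nat_le_iff of_nat_mult)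
    thus ?thesis using q1 by (simp add: le_divide_eq)
  qed
  finally show ?thesis .
qed

lemma div_powr_self: "0 < (x::real) \<Longrightarrow> x / x powr a = x powr (1 - a)"
  using powr_diff[of x 1 a] by simp

lemma E_bound:
  fixes \<alpha> \<beta> c T :: real and N q :: nat
  assumes a1: "\<alpha> > 1" and c0: "c > 0" and T1: "T \<ge> 1"
    and dio: "\<And>n::nat. n \<ge> 1 \<Longrightarrow> c \<le> real n powr T * dist_int (\<alpha> * real n)"
    and q1: "q \<ge> 1" and N1: "N \<ge> 1"
  shows "\<bar>real (card {n \<in> beatty \<alpha> \<beta>. n \<le> N \<and> q dvd n}) - real N / (\<alpha> * real q)\<bar>
          \<le> (6 * c powr (-1/T) + 5) * real N powr (1 - 1 / (4 * T))"
proof -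
  define \<delta> where "\<delta> = 1 / (4 * T)"
  have \<delta>0: "0 < \<delta>" "\<delta> \<le> 1/4" using T1 by (auto simp: \<delta>_def field_simps)
  have Np: "real N \<ge> 1" using N1 by simp
  have ap: "\<alpha> > 0" using a1 by simp
  have qp: "real q > 0" using q1 by simp
  define A where "A = real (card {n \<in> beatty \<alpha> \<beta>. n \<le> N \<and> q dvd n})"
  have cpos: "c powr (-1/T) > 0" using c0 by simp
  have Nd: "real N powr (1/2) \<le> real N powr (1 - \<delta>)" using Np \<delta>0 by (intro powr_mono) auto
  show ?thesis
  proof (cases "real q > real N powr (1/4)")
    case True
    have A0: "0 \<le> A" by (simp add: A_def)
    have A1: "A \<le> real N / real q" unfolding A_def by (rule mult_count[OF q1])
    have B1: "real N / (\<alpha> * real q) \<le> real N / real q"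
      using a1 qp by (intro divide_left_mono) auto
    have B0: "0 \<le> real N / (\<alpha> * real q)" using ap qp by simp
    have "real N / real q < real N / real N powr (1/4)"
    proof -
      have "real N powr (1/4) > 0" using Np by simp
      thus ?thesis using True Np qp by (intro divide_strict_left_mono) auto
    qed
    also have "\<dots> = real N powr (1 - 1/4)"
      using Np by (intro div_powr_self) auto
    also have "\<dots> = real N powr (3/4)" by simp
    also have "\<dots> \<le> real N powr (1 - \<delta>)" using Np \<delta>0 by (intro powr_mono) auto
    also have "\<dots> \<le> (6 * c powr (-1/T) + 5) * real N powr (1 - \<delta>)"
      using cpos by (simp add: mult_le_cancel_right1)
    finally have "real N / real q < (6 * c powr (-1/T) + 5) * real N powr (1 - \<delta>)" .
    thus ?thesis using A0 A1 B0 B1 unfolding A_def[symmetric] \<delta>_def by (simp add: abs_le_iff)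
  next
    case False
    define Qd where "Qd = nat \<lceil>sqrt (real N)\<rceil>"
    have sq1: "sqrt (real N) \<ge> 1" using Np by simp
    have c1: "(1::int) \<le> \<lceil>sqrt (real N)\<rceil>" using sq1 by (simp add: le_ceiling_iff)
    have "nat 1 \<le> nat \<lceil>sqrt (real N)\<rceil>" by (rule nat_mono[OF c1])
    hence Qd1: "Qd \<ge> 1" by (simp only: Qd_def nat_one_as_int[symmetric])
    have QQ: "real Qd = of_int \<lceil>sqrt (real N)\<rceil>" using c1 by (simp add: Qd_def)
    have Qdl: "real Qd \<ge> sqrt (real N)" "real Qd \<le> sqrt (real N) + 1"
      unfolding QQ using ceiling_correct[of "sqrt (real N)"] by linarith+
    obtain r :: nat where r: "r \<ge> 1" "r \<le> Qd" "c * real Qd < real q * real r powr T"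
      "\<bar>A - real N / (\<alpha> * real q)\<bar> \<le> 3 * (real N / \<alpha> + 1) / real r + 2 * real r + 1"
      using Aq_est[OF a1 c0 T1 dio q1 Qd1 N1, of \<beta>] unfolding A_def by blast
    have rp: "real r > 0" using r by simp
    have sqp: "sqrt (real N) = real N powr (1/2)" using Np by (simp add: powr_half_sqrt)
    have "c * real N powr (1/4) = c * (real N powr (1/2) / real N powr (1/4))"
      using Np by (simp add: powr_diff[symmetric])
    also have "\<dots> \<le> c * (real Qd / real q)"
    proof -
      have "real N powr (1/2) / real N powr (1/4) \<le> real Qd / real q"
        using False Qdl sqp qp Np by (intro frac_le) auto
      thus ?thesis using c0 by (intro mult_left_mono) auto
    qed
    also have "\<dots> < real r powr T"
      using r(3) qp by (simp add: field_simps)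
    finally have lt: "c * real N powr (1/4) < real r powr T" .
    have "(c * real N powr (1/4)) powr (1/T) < (real r powr T) powr (1/T)"
      using lt c0 T1 by (intro powr_less_mono2) auto
    also have "\<dots> = real r" using T1 rp by (simp add: powr_powr)
    also have "(c * real N powr (1/4)) powr (1/T) = c powr (1/T) * real N powr \<delta>"
      using c0 Np by (simp add: powr_mult powr_powr \<delta>_def)
    finally have rlow: "c powr (1/T) * real N powr \<delta> < real r" .
    have cT: "c powr (1/T) > 0" using c0 by simp
    have NN: "real N / \<alpha> + 1 \<le> 2 * real N"
    proof -
      have "real N / \<alpha> \<le> real N" using a1 Np by (simp add: divide_le_eq)
      thus ?thesis using Np by simp
    qed
    have "3 * (real N / \<alpha> + 1) / real r \<le> 6 * real N / real r"
      using NN rp by (intro divide_right_mono) auto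
    also have "\<dots> \<le> 6 * real N / (c powr (1/T) * real N powr \<delta>)"
    proof -
      have "0 < c powr (1/T) * real N powr \<delta>" using cT Np by simp
      thus ?thesis using rlow Np rp by (intro divide_left_mono) auto
    qed
    also have "\<dots> = 6 * c powr (-1/T) * real N powr (1 - \<delta>)"
      using cT Np c0 by (simp add: powr_diff powr_minus_divide field_simps)
    finally have t1: "3 * (real N / \<alpha> + 1) / real r \<le> 6 * c powr (-1/T) * real N powr (1 - \<delta>)" .
    have "2 * real r + 1 \<le> 2 * sqrt (real N) + 3" using r(2) Qdl by linarith
    also have "\<dots> \<le> 5 * sqrt (real N)" using sq1 by linarith
    also have "\<dots> \<le> 5 * real N powr (1 - \<delta>)" using Nd sqp by simp
    finally have t2: "2 * real r + 1 \<le> 5 * real N powr (1 - \<delta>)" .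
    have "\<bar>A - real N / (\<alpha> * real q)\<bar> \<le> (6 * c powr (-1/T) + 5) * real N powr (1 - \<delta>)"
      using r(4) t1 t2 by (simp add: algebra_simps)
    thus ?thesis unfolding A_def \<delta>_def .
  qed
qed



lemma tele:
  assumes "1 \<le> P" "P \<le> M"
  shows "(\<Sum>m\<in>{P<..M}. 1 / real m ^ 2) \<le> 1 / real P - 1 / real M"
  using assms(2)
proof (induction M rule: dec_induct)
  case base
  thus ?case by simp
next
  case (step M)
  have M1: "real M \<ge> 1" using step assms by simp
  have b: "1 / real (Suc M) ^ 2 \<le> 1 / real M - 1 / real (Suc M)"
  proof -
    have e1: "1 / real M - 1 / real (Suc M) = 1 / (real M * (real M + 1))" using M1 by (simp add: field_simps)
    have "real M * (real M + 1) \<le> (real M + 1) * (real M + 1)" by (intro mult_right_mono) auto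
    moreover have "real (Suc M) ^ 2 = (real M + 1) * (real M + 1)" by (simp add: power2_eq_square algebra_simps)
    ultimately have "real M * (real M + 1) \<le> real (Suc M) ^ 2" by linarith
    moreover have "0 < real M * (real M + 1)" using M1 by simp
    ultimately show ?thesis unfolding e1 by (simp add: frac_le)
  qed
  have "{P<..Suc M} = insert (Suc M) {P<..M}" using step by auto
  hence "(\<Sum>m\<in>{P<..Suc M}. 1 / real m ^ 2) = 1 / real (Suc M) ^ 2 + (\<Sum>m\<in>{P<..M}. 1 / real m ^ 2)"
    by simp
  also have "\<dots> \<le> 1 / real (Suc M) ^ 2 + (1 / real P - 1 / real M)" using step by simp
  finally show ?case using b by simp
qed

definition hk :: "nat \<Rightarrow> nat \<Rightarrow> real" where "hk k n = 1 / real n ^ k"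

lemma hk_nonneg: "hk k n \<ge> 0" by (simp add: hk_def)

lemma hk_summable:
  assumes "k \<ge> 2"
  shows "hk k summable_on A"
proof -
  have "summable (\<lambda>n. inverse (real n ^ k))" by (rule inverse_power_summable[OF assms])
  hence "summable (hk k)" by (simp add: hk_def[abs_def] inverse_eq_divide)
  hence "hk k summable_on UNIV"
    by (rule summable_nonneg_imp_summable_on_strong) (intro always_eventually allI hk_nonneg)
  thus ?thesis by (rule summable_on_subset) simp
qed

lemma zeta_eq:
  assumes "k \<ge> 2"
  shows "zeta_real (real k) = infsum (hk k) UNIV"
proof -
  have "summable (\<lambda>n. inverse (real n ^ k))" by (rule inverse_power_summable[OF assms])
  hence sm: "summable (hk k)" by (simp add: hk_def[abs_def] inverse_eq_divide)
  have "(hk k has_sum suminf (hk k)) UNIV"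
    by (rule sums_nonneg_imp_has_sum[OF summable_sums[OF sm] hk_nonneg])
  hence i: "infsum (hk k) UNIV = suminf (hk k)" by (rule infsumI)
  have "suminf (\<lambda>n. hk k (Suc n)) = suminf (hk k) - hk k 0" by (rule suminf_split_head[OF sm])
  moreover have "hk k 0 = 0" using assms by (simp add: hk_def)
  ultimately have "suminf (\<lambda>n. hk k (Suc n)) = suminf (hk k)" by simp
  moreover have "(\<lambda>n. 1 / real (Suc n) powr real k) = (\<lambda>n. hk k (Suc n))"
    by (rule ext) (simp add: hk_def powr_realpow)
  ultimately show ?thesis using i by (simp add: zeta_real_def)
qed

lemma tail_bound:
  assumes "k \<ge> 2" "P \<ge> 1"
  shows "infsum (hk k) {P<..} \<le> 1 / real P"
proof (rule infsum_le_finite_sums[OF hk_summable[OF assms(1)]])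
  fix F assume F: "finite F" "F \<subseteq> {P<..}"
  show "sum (hk k) F \<le> 1 / real P"
  proof (cases "F = {}")
    case True thus ?thesis by simp
  next
    case False
    define M where "M = Max F"
    have FM: "F \<subseteq> {P<..M}" using F False by (auto simp: M_def)
    have "M \<in> F" unfolding M_def by (rule Max_in[OF F(1) False])
    hence PM: "P \<le> M" using F(2) by auto
    have "sum (hk k) F \<le> sum (hk k) {P<..M}"
      by (rule sum_mono2) (use FM hk_nonneg in auto)
    also have "\<dots> \<le> (\<Sum>m\<in>{P<..M}. 1 / real m ^ 2)"
    proof (rule sum_mono)
      fix m assume m: "m \<in> {P<..M}"
      hence m1: "real m \<ge> 1" using assms by simp
      have "real m ^ 2 \<le> real m ^ k" using m1 assms by (intro power_increasing) auto
      moreover have "0 < real m ^ 2" using m1 by simp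
      ultimately show "hk k m \<le> 1 / real m ^ 2" by (simp add: hk_def frac_le)
    qed
    also have "\<dots> \<le> 1 / real P - 1 / real M" by (rule tele[OF assms(2) PM])
    also have "\<dots> \<le> 1 / real P" by simp
    finally show ?thesis .
  qed
qed

definition rough :: "nat set \<Rightarrow> nat set" where
  "rough S = {n. n \<ge> 1 \<and> (\<forall>p\<in>S. \<not> p dvd n)}"

lemma rough_insert:
  assumes "prime p" "p \<notin> S" "\<forall>q\<in>S. prime q"
  shows "rough S = rough (insert p S) \<union> (\<lambda>m. p * m) ` rough S"
    and "rough (insert p S) \<inter> (\<lambda>m. p * m) ` rough S = {}"
proof -
  show "rough (insert p S) \<inter> (\<lambda>m. p * m) ` rough S = {}"
    by (auto simp: rough_def)
  show "rough S = rough (insert p S) \<union> (\<lambda>m. p * m) ` rough S"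
  proof
    show "rough S \<subseteq> rough (insert p S) \<union> (\<lambda>m. p * m) ` rough S"
    proof
      fix n assume n: "n \<in> rough S"
      show "n \<in> rough (insert p S) \<union> (\<lambda>m. p * m) ` rough S"
      proof (cases "p dvd n")
        case True
        then obtain m where m: "n = p * m" by (auto simp: dvd_def)
        have "m \<ge> 1" using n m by (cases m) (auto simp: rough_def)
        moreover have "\<forall>q\<in>S. \<not> q dvd m" using n m by (auto simp: rough_def)
        ultimately have "m \<in> rough S" by (simp add: rough_def)
        thus ?thesis using m by blast
      next
        case False
        thus ?thesis using n by (auto simp: rough_def)
      qed
    qed
    show "rough (insert p S) \<union> (\<lambda>m. p * m) ` rough S \<subseteq> rough S"
    proof
      fix n assume "n \<in> rough (insert p S) \<union> (\<lambda>m. p * m) ` rough S"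
      thus "n \<in> rough S"
      proof
        assume "n \<in> rough (insert p S)" thus ?thesis by (auto simp: rough_def)
      next
        assume "n \<in> (\<lambda>m. p * m) ` rough S"
        then obtain m where m: "m \<in> rough S" "n = p * m" by blast
        have p1: "p \<ge> 1" using prime_gt_1_nat[OF assms(1)] by simp
        have "n \<ge> 1" using m p1 by (simp add: rough_def)
        moreover have "\<not> q dvd n" if q: "q \<in> S" for q
        proof
          assume "q dvd n"
          hence "q dvd p \<or> q dvd m" using m assms(3) q by (simp add: prime_dvd_mult_iff)
          moreover have "\<not> q dvd m" using m q by (simp add: rough_def)
          moreover have "q \<noteq> p" using q assms(2) by auto
          hence "\<not> q dvd p" using assms(1) assms(3) q primes_dvd_imp_eq[of q p] by auto
          ultimately show False by blast
        qed
        ultimately show ?thesis by (simp add: rough_def)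
      qed
    qed
  qed
qed

lemma rough_sum:
  assumes "k \<ge> 2" "finite S" "\<forall>q\<in>S. prime q"
  shows "infsum (hk k) (rough S) = (\<Prod>p\<in>S. 1 - 1 / real p ^ k) * infsum (hk k) UNIV"
  using assms(2,3)
proof (induction S rule: finite_induct)
  case empty
  have "infsum (hk k) (rough {}) = infsum (hk k) UNIV"
    by (rule infsum_cong_neutral) (use assms(1) in \<open>auto simp: rough_def hk_def\<close>)
  thus ?case by simp
next
  case (insert p S)
  have p: "prime p" using insert by simp
  have p1: "real p \<ge> 1" using prime_gt_1_nat[OF p] by simp
  note ri = rough_insert[OF p insert(2)] 
  have Sp: "\<forall>q\<in>S. prime q" using insert by simp
  have "infsum (hk k) (rough S) = infsum (hk k) (rough (insert p S)) + infsum (hk k) ((\<lambda>m. p * m) ` rough S)"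
    by (subst ri(1)[OF Sp]) (rule infsum_Un_disjoint[OF hk_summable[OF assms(1)] hk_summable[OF assms(1)] ri(2)[OF Sp]])
  also have "infsum (hk k) ((\<lambda>m. p * m) ` rough S) = infsum (hk k \<circ> (\<lambda>m. p * m)) (rough S)"
    using p by (intro infsum_reindex) (auto simp: inj_on_def prime_gt_0_nat)
  also have "hk k \<circ> (\<lambda>m. p * m) = (\<lambda>m. (1 / real p ^ k) * hk k m)"
    by (rule ext) (simp add: hk_def power_mult_distrib)
  also have "infsum (\<lambda>m. (1 / real p ^ k) * hk k m) (rough S) = (1 / real p ^ k) * infsum (hk k) (rough S)"
    by (rule infsum_cmult_right) (rule hk_summable[OF assms(1)])
  finally have eq: "infsum (hk k) (rough S) = infsum (hk k) (rough (insert p S)) + (1 / real p ^ k) * infsum (hk k) (rough S)" .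
  have "(1 - 1 / real p ^ k) * infsum (hk k) (rough S) = infsum (hk k) (rough S) - (1 / real p ^ k) * infsum (hk k) (rough S)"
    by (simp add: algebra_simps)
  hence "infsum (hk k) (rough (insert p S)) = (1 - 1 / real p ^ k) * infsum (hk k) (rough S)"
    using eq by linarith
  thus ?case using insert Sp by simp
qed

lemma zeta_prod_bounds:
  assumes "k \<ge> 2" "P \<ge> 1"
  defines "cP \<equiv> (\<Prod>p\<in>{p. prime p \<and> p \<le> P}. 1 - 1 / real p ^ k)"
  shows "1 \<le> cP * zeta_real (real k)" "cP * zeta_real (real k) \<le> 1 + 1 / real P"
proof -
  define SP where "SP = {p. prime p \<and> p \<le> P}"
  have fin: "finite SP" by (simp add: SP_def)
  have rs: "infsum (hk k) (rough SP) = cP * zeta_real (real k)"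
    using rough_sum[OF assms(1) fin] zeta_eq[OF assms(1)] by (simp add: SP_def cP_def)
  have sub1: "{1} \<subseteq> rough SP" by (auto simp: rough_def SP_def)
  have sub2: "rough SP \<subseteq> {1} \<union> {P<..}"
  proof
    fix n assume n: "n \<in> rough SP"
    show "n \<in> {1} \<union> {P<..}"
    proof (rule ccontr)
      assume "n \<notin> {1} \<union> {P<..}"
      hence "n \<noteq> 1" "n \<le> P" by auto
      moreover have "n \<ge> 1" using n by (simp add: rough_def)
      ultimately obtain q where q: "prime q" "q dvd n" using prime_factor_nat[of n] by auto
      have "q \<le> n" using q \<open>n \<ge> 1\<close> by (simp add: dvd_imp_le)
      hence "q \<in> SP" using q \<open>n \<le> P\<close> by (simp add: SP_def)
      thus False using n q by (auto simp: rough_def)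
    qed
  qed
  have "infsum (hk k) {1} \<le> infsum (hk k) (rough SP)"
    by (rule infsum_mono2[OF hk_summable[OF assms(1)] hk_summable[OF assms(1)] sub1]) (simp add: hk_nonneg)
  thus "1 \<le> cP * zeta_real (real k)" using rs by (simp add: hk_def)
  have "infsum (hk k) (rough SP) \<le> infsum (hk k) ({1} \<union> {P<..})"
    by (rule infsum_mono2[OF hk_summable[OF assms(1)] hk_summable[OF assms(1)] sub2]) (simp add: hk_nonneg)
  also have "\<dots> = infsum (hk k) {1} + infsum (hk k) {P<..}"
    using assms(2) by (intro infsum_Un_disjoint hk_summable[OF assms(1)]) auto
  also have "\<dots> \<le> 1 + 1 / real P" using tail_bound[OF assms(1,2)] by (simp add: hk_def)
  finally show "cP * zeta_real (real k) \<le> 1 + 1 / real P" using rs by simp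
qed



lemma prime_pow_prod_dvd:
  fixes n k :: nat
  assumes "finite X" "\<forall>p\<in>X. prime p"
  shows "(\<forall>p\<in>X. p ^ k dvd n) \<longleftrightarrow> (\<Prod>p\<in>X. p ^ k) dvd n"
  using assms
proof (induction X rule: finite_induct)
  case empty thus ?case by simp
next
  case (insert p X)
  have IH: "(\<forall>p\<in>X. p ^ k dvd n) \<longleftrightarrow> (\<Prod>p\<in>X. p ^ k) dvd n" using insert by simp
  have cop: "coprime (p ^ k) (\<Prod>q\<in>X. q ^ k)"
  proof (rule prod_coprime_right)
    fix q assume q: "q \<in> X"
    have "p \<noteq> q" using q insert(2) by auto
    hence "coprime p q" using insert(4) q by (intro primes_coprime) auto
    thus "coprime (p ^ k) (q ^ k)" by simp
  qed
  have "(\<forall>p'\<in>insert p X. p' ^ k dvd n) \<longleftrightarrow> p ^ k dvd n \<and> (\<Prod>p\<in>X. p ^ k) dvd n" using IH by simp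
  also have "\<dots> \<longleftrightarrow> p ^ k * (\<Prod>q\<in>X. q ^ k) dvd n"
  proof
    assume "p ^ k dvd n \<and> (\<Prod>p\<in>X. p ^ k) dvd n"
    thus "p ^ k * (\<Prod>q\<in>X. q ^ k) dvd n" using cop by (intro divides_mult) auto
  next
    assume h: "p ^ k * (\<Prod>q\<in>X. q ^ k) dvd n"
    have "p ^ k dvd n" using h dvd_mult_left by blast
    moreover have "(\<Prod>q\<in>X. q ^ k) dvd n" using h dvd_mult_right by blast
    ultimately show "p ^ k dvd n \<and> (\<Prod>p\<in>X. p ^ k) dvd n" by simp
  qed
  also have "p ^ k * (\<Prod>q\<in>X. q ^ k) = (\<Prod>q\<in>insert p X. q ^ k)" using insert by simp
  finally show ?case .
qed

lemma prod_of_bool: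
  assumes "finite X"
  shows "(\<Prod>p\<in>X. (of_bool (Q p) :: real)) = of_bool (\<forall>p\<in>X. Q p)"
  using assms by (induction X rule: finite_induct) auto

lemma indicator_expand:
  fixes n k :: nat and SP :: "nat set"
  assumes "finite SP" "\<forall>p\<in>SP. prime p"
  shows "(of_bool (\<forall>p\<in>SP. \<not> p ^ k dvd n) :: real)
     = (\<Sum>X\<in>Pow SP. (-1) ^ card X * of_bool ((\<Prod>p\<in>X. p ^ k) dvd n))"
proof -
  have "(of_bool (\<forall>p\<in>SP. \<not> p ^ k dvd n) :: real) = (\<Prod>p\<in>SP. of_bool (\<not> p ^ k dvd n))"
    by (rule prod_of_bool[OF assms(1), symmetric])
  also have "\<dots> = (\<Prod>p\<in>SP. (-1) * of_bool (p ^ k dvd n) + 1)"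
    by (rule prod.cong) auto
  also have "\<dots> = (\<Sum>X\<in>Pow SP. (\<Prod>p\<in>X. (-1) * of_bool (p ^ k dvd n)) * (\<Prod>p\<in>SP - X. 1))"
    by (rule prod_add[OF assms(1)])
  also have "\<dots> = (\<Sum>X\<in>Pow SP. (-1) ^ card X * of_bool ((\<Prod>p\<in>X. p ^ k) dvd n))"
  proof (rule sum.cong[OF refl])
    fix X assume X: "X \<in> Pow SP"
    have fX: "finite X" using X assms(1) by (auto intro: finite_subset)
    have pX: "\<forall>p\<in>X. prime p" using X assms(2) by auto
    have "(\<Prod>p\<in>X. (-1) * (of_bool (p ^ k dvd n) :: real)) = (\<Prod>p\<in>X. (-1::real)) * (\<Prod>p\<in>X. of_bool (p ^ k dvd n))"
      by (rule prod.distrib)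
    also have "(\<Prod>p\<in>X. (-1::real)) = (-1) ^ card X" by simp
    also have "(\<Prod>p\<in>X. (of_bool (p ^ k dvd n) :: real)) = of_bool (\<forall>p\<in>X. p ^ k dvd n)"
      by (rule prod_of_bool[OF fX])
    also have "(\<forall>p\<in>X. p ^ k dvd n) \<longleftrightarrow> (\<Prod>p\<in>X. p ^ k) dvd n" by (rule prime_pow_prod_dvd[OF fX pX])
    finally show "(\<Prod>p\<in>X. (-1) * (of_bool (p ^ k dvd n) :: real)) * (\<Prod>p\<in>SP - X. 1)
        = (-1) ^ card X * of_bool ((\<Prod>p\<in>X. p ^ k) dvd n)" by simp
  qed
  finally show ?thesis .
qed

lemma prod_neg_inv:
  fixes f :: "nat \<Rightarrow> nat"
  assumes "finite X" "\<forall>p\<in>X. f p > 0"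
  shows "(\<Prod>p\<in>X. - (1 / real (f p))) = (-1) ^ card X / real (\<Prod>p\<in>X. f p)"
  using assms
proof (induction X rule: finite_induct)
  case empty thus ?case by simp
next
  case (insert p X)
  have fp: "real (f p) > 0" using insert by simp
  have "(\<Prod>q\<in>insert p X. - (1 / real (f q))) = - (1 / real (f p)) * ((-1) ^ card X / real (\<Prod>q\<in>X. f q))"
    using insert by simp
  also have "\<dots> = (-1) ^ card (insert p X) / real (\<Prod>q\<in>insert p X. f q)"
    using insert fp by (simp add: field_simps)
  finally show ?case .
qed

lemma main_expand:
  fixes x :: real and k :: nat and SP :: "nat set"
  assumes "finite SP" "\<forall>p\<in>SP. prime p"
  shows "x * (\<Prod>p\<in>SP. 1 - 1 / real p ^ k) = (\<Sum>X\<in>Pow SP. (-1) ^ card X * (x / real (\<Prod>p\<in>X. p ^ k)))"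
proof -
  have "(\<Prod>p\<in>SP. 1 - 1 / real p ^ k) = (\<Prod>p\<in>SP. - (1 / real (p ^ k)) + 1)"
    by (rule prod.cong) auto
  also have "\<dots> = (\<Sum>X\<in>Pow SP. (\<Prod>p\<in>X. - (1 / real (p ^ k))) * (\<Prod>p\<in>SP - X. 1))"
    by (rule prod_add[OF assms(1)])
  also have "\<dots> = (\<Sum>X\<in>Pow SP. (-1) ^ card X / real (\<Prod>p\<in>X. p ^ k))"
  proof (rule sum.cong[OF refl])
    fix X assume X: "X \<in> Pow SP"
    have fX: "finite X" using X assms(1) by (auto intro: finite_subset)
    have "\<forall>p\<in>X. p ^ k > 0" using X assms(2) by (auto simp: prime_gt_0_nat)
    thus "(\<Prod>p\<in>X. - (1 / real (p ^ k))) * (\<Prod>p\<in>SP - X. 1) = (-1) ^ card X / real (\<Prod>p\<in>X. p ^ k)"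
      using prod_neg_inv[OF fX, of "\<lambda>p. p ^ k"] by simp
  qed
  finally show ?thesis by (simp add: sum_distrib_left field_simps)
qed

lemma sieve_main:
  fixes U :: "nat set" and k P :: nat and E x :: real
  assumes finU: "finite U"
    and Eb: "\<And>q. q \<ge> 1 \<Longrightarrow> \<bar>real (card {n\<in>U. q dvd n}) - x / real q\<bar> \<le> E"
  shows "\<bar>real (card {n\<in>U. \<forall>p\<in>{p. prime p \<and> p \<le> P}. \<not> p ^ k dvd n})
          - x * (\<Prod>p\<in>{p. prime p \<and> p \<le> P}. 1 - 1 / real p ^ k)\<bar> \<le> 2 ^ P * E"
proof -
  define SP where "SP = {p. prime p \<and> p \<le> P}"
  have fSP: "finite SP" by (simp add: SP_def)
  have pSP: "\<forall>p\<in>SP. prime p" by (simp add: SP_def)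
  define qq where "qq = (\<lambda>X::nat set. \<Prod>p\<in>X. p ^ k)"
  have qq1: "qq X \<ge> 1" if "X \<in> Pow SP" for X
  proof -
    have "\<forall>p\<in>X. p ^ k > 0" using that pSP by (auto simp: prime_gt_0_nat)
    hence "qq X > 0" unfolding qq_def by (intro prod_pos) auto
    thus ?thesis by simp
  qed
  have "real (card {n\<in>U. \<forall>p\<in>SP. \<not> p ^ k dvd n}) = (\<Sum>n\<in>U. (of_bool (\<forall>p\<in>SP. \<not> p ^ k dvd n) :: real))"
    using finU by (simp add: sum.If_cases Int_def)
  also have "\<dots> = (\<Sum>n\<in>U. \<Sum>X\<in>Pow SP. (-1) ^ card X * of_bool (qq X dvd n))"
    unfolding qq_def by (rule sum.cong[OF refl]) (rule indicator_expand[OF fSP pSP])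
  also have "\<dots> = (\<Sum>X\<in>Pow SP. \<Sum>n\<in>U. (-1) ^ card X * of_bool (qq X dvd n))"
    by (rule sum.swap)
  also have "\<dots> = (\<Sum>X\<in>Pow SP. (-1) ^ card X * real (card {n\<in>U. qq X dvd n}))"
  proof (rule sum.cong[OF refl])
    fix X
    have "(\<Sum>n\<in>U. (of_bool (qq X dvd n) :: real)) = real (card {n\<in>U. qq X dvd n})"
      using finU by (simp add: sum.If_cases Int_def)
    thus "(\<Sum>n\<in>U. (-1) ^ card X * (of_bool (qq X dvd n) :: real)) = (-1) ^ card X * real (card {n\<in>U. qq X dvd n})"
      by (simp add: sum_distrib_left[symmetric])
  qed
  finally have c1: "real (card {n\<in>U. \<forall>p\<in>SP. \<not> p ^ k dvd n}) = (\<Sum>X\<in>Pow SP. (-1) ^ card X * real (card {n\<in>U. qq X dvd n}))" .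
  have c2: "x * (\<Prod>p\<in>SP. 1 - 1 / real p ^ k) = (\<Sum>X\<in>Pow SP. (-1) ^ card X * (x / real (qq X)))"
    unfolding qq_def by (rule main_expand[OF fSP pSP])
  have "real (card {n\<in>U. \<forall>p\<in>SP. \<not> p ^ k dvd n}) - x * (\<Prod>p\<in>SP. 1 - 1 / real p ^ k)
      = (\<Sum>X\<in>Pow SP. (-1) ^ card X * (real (card {n\<in>U. qq X dvd n}) - x / real (qq X)))"
    unfolding c1 c2 by (simp add: sum_subtractf[symmetric] algebra_simps)
  also have "\<bar>\<dots>\<bar> \<le> (\<Sum>X\<in>Pow SP. \<bar>(-1) ^ card X * (real (card {n\<in>U. qq X dvd n}) - x / real (qq X))\<bar>)"
    by (rule sum_abs)
  also have "\<dots> \<le> (\<Sum>X\<in>Pow SP. E)"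
  proof (rule sum_mono)
    fix X assume X: "X \<in> Pow SP"
    show "\<bar>(-1) ^ card X * (real (card {n\<in>U. qq X dvd n}) - x / real (qq X))\<bar> \<le> E"
      using Eb[OF qq1[OF X]] by (simp add: abs_mult)
  qed
  also have "\<dots> = 2 ^ card SP * E" using fSP by (simp add: card_Pow)
  also have "\<dots> \<le> 2 ^ P * E"
  proof -
    have "SP \<subseteq> {1..P}" by (auto simp: SP_def dest: prime_gt_1_nat)
    hence "card SP \<le> P" using card_mono[of "{1..P}" SP] by simp
    hence "(2::real) ^ card SP \<le> 2 ^ P" by (intro power_increasing) auto
    moreover have "E \<ge> 0" using Eb[of 1] by linarith
    ultimately show ?thesis by (intro mult_right_mono) auto
  qed
  finally show ?thesis unfolding SP_def .
qed



lemma exp1_lt3: "exp 1 < (3::real)"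
proof -
  have b: "exp (1/4::real) \<le> 1 + 1/4 + (1/4)^2" by (rule exp_bound) auto
  have "exp (1::real) = exp (real 4 * (1/4))" by simp
  also have "\<dots> = exp (1/4) ^ 4" by (rule exp_of_nat_mult)
  also have "\<dots> \<le> (1 + 1/4 + (1/4)^2) ^ 4" using b by (intro power_mono) auto
  also have "\<dots> < 3" by (simp add: eval_nat_numeral power2_eq_square)
  finally show ?thesis .
qed

lemma lnln3_pos: "ln (ln (3::real)) > 0"
proof -
  have "ln (exp 1) < ln (3::real)" using exp1_lt3 by (subst ln_less_cancel_iff) auto
  hence "1 < ln (3::real)" by simp
  thus ?thesis by simp
qed

lemma tail_count:
  fixes \<alpha> \<beta> :: real and N k P :: nat
  assumes k2: "k \<ge> 2" and P1: "P \<ge> 1"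
  defines "U \<equiv> {n \<in> beatty \<alpha> \<beta>. n \<le> N}"
  shows "card {n\<in>U. kfree k n} \<le> card {n\<in>U. \<forall>p\<in>{p. prime p \<and> p \<le> P}. \<not> p ^ k dvd n}"
    and "real (card {n\<in>U. \<forall>p\<in>{p. prime p \<and> p \<le> P}. \<not> p ^ k dvd n}) - real (card {n\<in>U. kfree k n})
          \<le> real N / real P"
proof -
  define A where "A = {n\<in>U. \<forall>p\<in>{p. prime p \<and> p \<le> P}. \<not> p ^ k dvd n}"
  define B where "B = {n\<in>U. kfree k n}"
  have finU: "finite U" unfolding U_def by (rule finite_subset[of _ "{..N}"]) auto
  have BA: "B \<subseteq> A" by (auto simp: A_def B_def kfree_def)
  have finA: "finite A" using finU by (simp add: A_def)
  show "card {n\<in>U. kfree k n} \<le> card {n\<in>U. \<forall>p\<in>{p. prime p \<and> p \<le> P}. \<not> p ^ k dvd n}"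
    using card_mono[OF finA BA] by (simp add: A_def B_def)
  have cAB: "card A = card B + card (A - B)"
    using card_Diff_subset[OF finite_subset[OF BA finA] BA] card_mono[OF finA BA] by simp
  have sub: "A - B \<subseteq> (\<Union>m\<in>{P<..N}. {n \<in> beatty \<alpha> \<beta>. n \<le> N \<and> m ^ k dvd n})"
  proof
    fix n assume n: "n \<in> A - B"
    hence nU: "n \<in> U" and nk: "\<not> kfree k n" and nA: "\<forall>p\<in>{p. prime p \<and> p \<le> P}. \<not> p ^ k dvd n"
      by (auto simp: A_def B_def)
    then obtain p where p: "prime p" "p ^ k dvd n" by (auto simp: kfree_def)
    have "p > P" using nA p by auto
    have n1: "n \<ge> 1" "n \<le> N" using nU by (auto simp: U_def beatty_def)
    have "p \<le> p ^ k" using prime_gt_1_nat[OF p(1)] k2 by (intro self_le_power) auto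
    also have "p ^ k \<le> n" using p n1 by (intro dvd_imp_le) auto
    finally have "p \<le> N" using n1 by simp
    thus "n \<in> (\<Union>m\<in>{P<..N}. {n \<in> beatty \<alpha> \<beta>. n \<le> N \<and> m ^ k dvd n})"
      using \<open>p > P\<close> p nU by (auto simp: U_def)
  qed
  have "card (A - B) \<le> card (\<Union>m\<in>{P<..N}. {n \<in> beatty \<alpha> \<beta>. n \<le> N \<and> m ^ k dvd n})"
    by (rule card_mono[OF _ sub]) (rule finite_UN_I; (rule finite_subset[of _ "{..N}"])?; auto)
  also have "\<dots> \<le> (\<Sum>m\<in>{P<..N}. card {n \<in> beatty \<alpha> \<beta>. n \<le> N \<and> m ^ k dvd n})"
    by (rule card_UN_le) simp
  finally have "real (card (A - B)) \<le> real (\<Sum>m\<in>{P<..N}. card {n \<in> beatty \<alpha> \<beta>. n \<le> N \<and> m ^ k dvd n})"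
    by linarith
  also have "\<dots> = (\<Sum>m\<in>{P<..N}. real (card {n \<in> beatty \<alpha> \<beta>. n \<le> N \<and> m ^ k dvd n}))" by simp
  also have "\<dots> \<le> (\<Sum>m\<in>{P<..N}. real N * (1 / real m ^ 2))"
  proof (rule sum_mono)
    fix m assume m: "m \<in> {P<..N}"
    have m1: "real m \<ge> 1" using m P1 by simp
    have "m ^ k \<ge> 1" using m P1 by simp
    hence "real (card {n \<in> beatty \<alpha> \<beta>. n \<le> N \<and> m ^ k dvd n}) \<le> real N / real (m ^ k)"
      by (rule mult_count)
    also have "\<dots> \<le> real N / real m ^ 2"
    proof -
      have "real m ^ 2 \<le> real m ^ k" using m1 k2 by (intro power_increasing) auto
      moreover have "0 < real m ^ 2" using m1 by simp
      ultimately show ?thesis by (simp add: divide_left_mono)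
    qed
    finally show "real (card {n \<in> beatty \<alpha> \<beta>. n \<le> N \<and> m ^ k dvd n}) \<le> real N * (1 / real m ^ 2)"
      by simp
  qed
  also have "\<dots> = real N * (\<Sum>m\<in>{P<..N}. 1 / real m ^ 2)" by (simp add: sum_distrib_left)
  also have "\<dots> \<le> real N * (1 / real P)"
  proof (cases "P \<le> N")
    case True
    have "(\<Sum>m\<in>{P<..N}. 1 / real m ^ 2) \<le> 1 / real P - 1 / real N" by (rule tele[OF P1 True])
    also have "\<dots> \<le> 1 / real P" by simp
    finally show ?thesis by (intro mult_left_mono) auto
  next
    case False
    thus ?thesis by simp
  qed
  finally have "real (card (A - B)) \<le> real N / real P" by simp
  thus "real (card {n\<in>U. \<forall>p\<in>{p. prime p \<and> p \<le> P}. \<not> p ^ k dvd n}) - real (card {n\<in>U. kfree k n})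
          \<le> real N / real P"
    using cAB unfolding A_def B_def by simp
qed



lemma ln_le_powr:
  fixes x e :: real
  assumes "x \<ge> 1" "e > 0"
  shows "e * ln x \<le> x powr e"
proof -
  have "ln (x powr e) \<le> x powr e - 1" using assms by (intro ln_le_minus_one) simp
  moreover have "ln (x powr e) = e * ln x" using assms by (simp add: ln_powr)
  ultimately show ?thesis by simp
qed

theorem corollary2:
  fixes \<alpha> :: real
  assumes "\<alpha> > 1" and "\<alpha> \<notin> \<rat>" and "finite_type \<alpha>"
  shows "\<exists>C>0. \<forall>(\<beta>::real) (k::nat) (N::nat). k \<ge> 2 \<longrightarrow> N \<ge> 3 \<longrightarrow>
     \<bar>real (card {n \<in> beatty \<alpha> \<beta>. n \<le> N \<and> kfree k n})
        - real N / (\<alpha> * zeta_real (real k))\<bar>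
       \<le> C * real N * ln (ln (real N)) / ln (real N)"
proof -
  obtain c T where c0: "c > 0" and T1: "T \<ge> 1"
    and dio: "\<And>n::nat. n \<ge> 1 \<Longrightarrow> c \<le> real n powr T * dist_int (\<alpha> * real n)"
    using dioph[OF assms(2,3)] by blast
  define \<delta> where "\<delta> = 1 / (4 * T)"
  have \<delta>0: "0 < \<delta>" "\<delta> \<le> 1/4" using T1 by (auto simp: \<delta>_def field_simps)
  define K0 where "K0 = 6 * c powr (-1/T) + 5"
  have K0p: "K0 > 0" using c0 by (simp add: K0_def add_pos_nonneg)
  define N0 :: real where "N0 = 2 powr (4 / \<delta>)"
  have N0big: "N0 \<ge> 65536"
  proof -
    have "4 / \<delta> \<ge> 16" using \<delta>0 by (simp add: field_simps)
    hence "2 powr 16 \<le> 2 powr (4 / \<delta>)" by (intro powr_mono) auto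
    moreover have "(2::real) powr 16 = 65536" by (simp add: powr_realpow[of 2 16, simplified])
    ultimately show ?thesis by (simp add: N0_def)
  qed
  have lnN0: "ln N0 > 0" using N0big by simp
  have ll3: "ln (ln (3::real)) > 0" by (rule lnln3_pos)
  define C where "C = (2 * K0 + 8) / \<delta> + ln N0 / ln (ln 3) + 1"
  have Cpos: "C > 0" using K0p \<delta>0 lnN0 ll3 by (simp add: C_def add_pos_nonneg)
  have main: "\<bar>real (card {n \<in> beatty \<alpha> \<beta>. n \<le> N \<and> kfree k n}) - real N / (\<alpha> * zeta_real (real k))\<bar>
       \<le> C * real N * ln (ln (real N)) / ln (real N)" if k2: "k \<ge> 2" and N3: "N \<ge> 3" for \<beta> k N
  proof -
    define Kf where "Kf = real (card {n \<in> beatty \<alpha> \<beta>. n \<le> N \<and> kfree k n})"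
    define Z where "Z = zeta_real (real k)"
    have Nr: "real N \<ge> 3" using N3 by simp
    have ap: "\<alpha> > 0" using assms(1) by simp
    have e0: "{p::nat. prime p \<and> p \<le> 1} = {}" by (auto dest: prime_gt_1_nat)
    have Z1: "Z \<ge> 1" using zeta_prod_bounds(1)[OF k2, of 1] unfolding e0 by (simp add: Z_def)
    have Kf0: "0 \<le> Kf" by (simp add: Kf_def)
    have KfN: "Kf \<le> real N"
    proof -
      have "{n \<in> beatty \<alpha> \<beta>. n \<le> N \<and> kfree k n} \<subseteq> {1..N}" by (auto simp: beatty_def)
      hence "card {n \<in> beatty \<alpha> \<beta>. n \<le> N \<and> kfree k n} \<le> card {1..N}" by (intro card_mono) auto
      thus ?thesis by (simp add: Kf_def)
    qed
    have M0: "0 \<le> real N / (\<alpha> * Z)" using ap Z1 by simp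
    have MN: "real N / (\<alpha> * Z) \<le> real N"
    proof -
      have "1 * 1 \<le> \<alpha> * Z" using assms(1) Z1 by (intro mult_mono) auto
      hence "1 \<le> \<alpha> * Z" by simp
      thus ?thesis using Nr by (simp add: divide_le_eq mult_le_cancel_left1)
    qed
    have lnNpos: "ln (real N) > 0" using Nr by simp
    have lnln_mono: "ln (ln (real N)) \<ge> ln (ln 3)"
    proof -
      have "ln 3 \<le> ln (real N)" using Nr by simp
      moreover have l3: "ln (3::real) > 0" by simp
      ultimately show ?thesis using ln_le_cancel_iff[OF l3, of "ln (real N)"] lnNpos by simp
    qed
    show ?thesis
    proof (cases "real N < N0")
      case True
      have "\<bar>Kf - real N / (\<alpha> * Z)\<bar> \<le> real N" using Kf0 KfN M0 MN by linarith
      also have "real N = (ln N0 / ln (ln 3)) * real N * ln (ln 3) / ln N0"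
        using ll3 lnN0 by (simp add: field_simps)
      also have "\<dots> \<le> C * real N * ln (ln (real N)) / ln (real N)"
      proof -
        have a: "ln N0 / ln (ln 3) \<le> C" using K0p \<delta>0 by (simp add: C_def)
        have b: "ln (real N) \<le> ln N0" using True Nr by simp
        have "(ln N0 / ln (ln 3)) * real N * ln (ln 3) \<le> C * real N * ln (ln (real N))"
          using a lnln_mono ll3 lnN0 Nr Cpos by (intro mult_mono) (auto intro: mult_nonneg_nonneg)
        hence "(ln N0 / ln (ln 3)) * real N * ln (ln 3) / ln N0 \<le> C * real N * ln (ln (real N)) / ln N0"
          using lnN0 by (intro divide_right_mono) auto
        also have "\<dots> \<le> C * real N * ln (ln (real N)) / ln (real N)"
        proof (rule divide_left_mono)
          have "0 < ln (ln (real N))" using ll3 lnln_mono by linarith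
          thus "0 \<le> C * real N * ln (ln (real N))"
            using Cpos Nr by (intro mult_nonneg_nonneg) auto
        qed (use b lnNpos lnN0 in auto)
        finally show ?thesis .
      qed
      finally show ?thesis unfolding Kf_def Z_def .
    next
      case False
      hence NN0: "real N \<ge> N0" by simp
      have N1: "N \<ge> 1" using N3 by simp
      have Npos: "real N > 0" using Nr by simp
      have lnln1: "ln (ln (real N)) \<ge> 1"
      proof -
        have "exp (exp 1) \<le> exp (3::real)" using exp_le by simp
        also have "exp (3::real) = exp 1 ^ 3" using exp_of_nat_mult[of 3 1] by simp
        also have "\<dots> \<le> 3 ^ 3" using exp_le by (intro power_mono) auto
        also have "\<dots> \<le> real N" using NN0 N0big by simp
        finally have "exp (exp 1) \<le> real N" .
        hence "exp 1 \<le> ln (real N)" using Npos by (metis exp_gt_zero ln_exp ln_le_cancel_iff)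
        hence "exp 1 \<le> exp (ln (ln (real N)))" using lnNpos by simp
        thus ?thesis by simp
      qed
      define y where "y = \<delta> / 2 * log 2 (real N)"
      have logN: "log 2 (real N) \<ge> 4 / \<delta>"
      proof -
        have "log 2 N0 \<le> log 2 (real N)" using NN0 N0big by simp
        moreover have "log 2 N0 = 4 / \<delta>" by (simp add: N0_def)
        ultimately show ?thesis by simp
      qed
      have y2: "y \<ge> 2" using logN \<delta>0 by (simp add: y_def field_simps)
      define P where "P = nat \<lfloor>y\<rfloor>"
      have Py: "real P \<le> y" "y - 1 < real P" using y2 by (simp_all add: P_def)
      have P1: "P \<ge> 1" using Py y2 by linarith
      have ln2: "ln (2::real) \<le> 1" using ln_le_minus_one[of 2] by simp
      have logln: "log 2 (real N) \<ge> ln (real N)"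
      proof -
        have "log 2 (real N) = ln (real N) / ln 2" by (simp add: log_def)
        also have "\<dots> \<ge> ln (real N)" using ln2 lnNpos by (simp add: le_divide_eq mult_le_cancel_left1)
        finally show ?thesis .
      qed
      have Plow: "real P \<ge> \<delta> / 4 * ln (real N)"
      proof -
        have "real P \<ge> y / 2" using Py y2 by linarith
        moreover have "y / 2 \<ge> \<delta> / 4 * ln (real N)" using logln \<delta>0 by (simp add: y_def)
        ultimately show ?thesis by linarith
      qed
      have twoP: "2 ^ P \<le> real N powr (\<delta> / 2)"
      proof -
        have "(2::real) ^ P = 2 powr (real P)" by (simp add: powr_realpow)
        also have "\<dots> \<le> 2 powr y" using Py by (intro powr_mono) auto
        also have "\<dots> = (2 powr log 2 (real N)) powr (\<delta> / 2)" by (simp add: y_def powr_powr mult.commute)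
        also have "\<dots> = real N powr (\<delta> / 2)" using Npos by simp
        finally show ?thesis .
      qed
      define U where "U = {n \<in> beatty \<alpha> \<beta>. n \<le> N}"
      define cP where "cP = (\<Prod>p\<in>{p. prime p \<and> p \<le> P}. 1 - 1 / real p ^ k)"
      define KP where "KP = real (card {n\<in>U. \<forall>p\<in>{p. prime p \<and> p \<le> P}. \<not> p ^ k dvd n})"
      define E where "E = K0 * real N powr (1 - \<delta>)"
      have finU: "finite U" unfolding U_def by (rule finite_subset[of _ "{..N}"]) auto
      have Eb: "\<bar>real (card {n\<in>U. q dvd n}) - (real N / \<alpha>) / real q\<bar> \<le> E" if q: "q \<ge> 1" for q
      proof -
        have "{n\<in>U. q dvd n} = {n \<in> beatty \<alpha> \<beta>. n \<le> N \<and> q dvd n}" by (auto simp: U_def)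
        moreover have "(real N / \<alpha>) / real q = real N / (\<alpha> * real q)" by simp
        ultimately show ?thesis
          using E_bound[OF assms(1) c0 T1 dio q N1, of \<beta>] by (simp add: E_def K0_def \<delta>_def)
      qed
      have s1: "\<bar>KP - (real N / \<alpha>) * cP\<bar> \<le> 2 ^ P * E"
        unfolding KP_def cP_def by (rule sieve_main[OF finU Eb])
      have setK: "{n\<in>U. kfree k n} = {n \<in> beatty \<alpha> \<beta>. n \<le> N \<and> kfree k n}" by (auto simp: U_def)
      note tc = tail_count[OF k2 P1, of \<alpha> \<beta> N, folded U_def]
      have t1a: "KP - Kf \<le> real N / real P" using tc(2) unfolding KP_def Kf_def setK[symmetric] .
      have t1b: "Kf \<le> KP" using tc(1) unfolding KP_def Kf_def setK[symmetric] by simp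
      note t1 = t1a t1b
      have zb: "1 \<le> cP * Z" "cP * Z \<le> 1 + 1 / real P"
        using zeta_prod_bounds[OF k2 P1] by (simp_all add: cP_def Z_def)
      have z3: "\<bar>(real N / \<alpha>) * cP - real N / (\<alpha> * Z)\<bar> \<le> real N / real P"
      proof -
        have eq: "(real N / \<alpha>) * cP - real N / (\<alpha> * Z) = (real N / \<alpha>) * ((cP * Z - 1) / Z)"
          using Z1 ap by (simp add: field_simps)
        have "0 \<le> (cP * Z - 1) / Z" using zb Z1 by simp
        moreover have "(cP * Z - 1) / Z \<le> 1 / real P"
        proof -
          have "(cP * Z - 1) / Z \<le> cP * Z - 1" using zb Z1 by (simp add: divide_le_eq mult_le_cancel_left1)
          thus ?thesis using zb by linarith
        qed
        ultimately have wb: "\<bar>(cP * Z - 1) / Z\<bar> \<le> 1 / real P" by simp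
        define w where "w = (cP * Z - 1) / Z"
        have na: "real N / \<alpha> \<ge> 0" using ap by simp
        have "\<bar>(real N / \<alpha>) * w\<bar> = (real N / \<alpha>) * \<bar>w\<bar>" by (simp only: abs_mult abs_of_nonneg[OF na])
        also have "\<dots> \<le> (real N / \<alpha>) * (1 / real P)" using wb unfolding w_def[symmetric] by (rule mult_left_mono[OF _ na])
        finally have "\<bar>(real N / \<alpha>) * ((cP * Z - 1) / Z)\<bar> \<le> (real N / \<alpha>) * (1 / real P)" unfolding w_def .
        also have "\<dots> \<le> real N * (1 / real P)"
          using assms(1) Npos P1 by (intro mult_right_mono) (auto simp: divide_le_eq)
        finally show ?thesis unfolding eq by simp
      qed
      have total: "\<bar>Kf - real N / (\<alpha> * Z)\<bar> \<le> 2 * (real N / real P) + 2 ^ P * E"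
        using s1 t1 z3 by (simp add: abs_le_iff)
      have lnpos2: "\<delta> / 4 * ln (real N) > 0" using \<delta>0 lnNpos by simp
      have e1: "2 * (real N / real P) \<le> 8 / \<delta> * (real N / ln (real N))"
      proof -
        have "real N / real P \<le> real N / (\<delta> / 4 * ln (real N))"
          using Plow lnpos2 Npos by (intro divide_left_mono) auto
        also have "\<dots> = 4 / \<delta> * (real N / ln (real N))" using \<delta>0 lnNpos by (simp add: field_simps)
        finally show ?thesis by simp
      qed
      have e2: "2 ^ P * E \<le> 2 * K0 / \<delta> * (real N / ln (real N))"
      proof -
        have "2 ^ P * E \<le> real N powr (\<delta> / 2) * E"
          using twoP K0p by (intro mult_right_mono) (auto simp: E_def)
        also have "\<dots> = K0 * (real N powr (\<delta> / 2) * real N powr (1 - \<delta>))" by (simp add: E_def)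
        also have "real N powr (\<delta> / 2) * real N powr (1 - \<delta>) = real N powr (1 - \<delta> / 2)"
          by (simp add: powr_add[symmetric])
        also have "real N powr (1 - \<delta> / 2) = real N / real N powr (\<delta> / 2)"
          using Npos by (simp add: div_powr_self)
        also have "\<dots> \<le> real N / (\<delta> / 2 * ln (real N))"
        proof (rule divide_left_mono)
          show "\<delta> / 2 * ln (real N) \<le> real N powr (\<delta> / 2)" using Nr \<delta>0 by (intro ln_le_powr) auto
        qed (use Npos \<delta>0 lnNpos in auto)
        also have "real N / (\<delta> / 2 * ln (real N)) = 2 / \<delta> * (real N / ln (real N))"
          using \<delta>0 lnNpos by (simp add: field_simps)
        finally show ?thesis using K0p by (simp add: mult_left_mono field_simps)
      qed
      have "\<bar>Kf - real N / (\<alpha> * Z)\<bar> \<le> (2 * K0 + 8) / \<delta> * (real N / ln (real N))"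
      proof -
        have "(2 * K0 + 8) / \<delta> * (real N / ln (real N)) = 8 / \<delta> * (real N / ln (real N)) + 2 * K0 / \<delta> * (real N / ln (real N))"
          by (simp add: add_divide_distrib distrib_right)
        thus ?thesis using total e1 e2 by linarith
      qed
      also have "\<dots> \<le> C * (real N / ln (real N))"
        using lnN0 ll3 Npos lnNpos by (intro mult_right_mono) (auto simp: C_def)
      also have "\<dots> \<le> C * (real N / ln (real N)) * ln (ln (real N))"
      proof -
        have "0 \<le> C * (real N / ln (real N))" using Cpos Npos lnNpos by simp
        hence "C * (real N / ln (real N)) * 1 \<le> C * (real N / ln (real N)) * ln (ln (real N))"
          using lnln1 by (intro mult_left_mono) auto
        thus ?thesis by simp
      qed
      also have "\<dots> = C * real N * ln (ln (real N)) / ln (real N)" by simp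
      finally show ?thesis unfolding Kf_def Z_def .
    qed
  qed
  show ?thesis using Cpos main by blast
qed


end
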